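(* Let $N\ge1$ and let $\hat\Phi\in\mathrm H(\mathbb C_N^{\otimes2})$ be a random self-adjoint tensor with partition function $$\mathcal Z_{\hat{\rm H}\rm T}(\lambda)=\int_{\mathrm H(\mathbb C_N^{\otimes2})}\mathcal D\hat\Phi\;e^{-\frac N2\mathrm{Tr}(\hat\Phi^2)+\hat V_4(\lambda)},$$ $$\hat V_4(\lambda)=N\frac{\lambda}{2}\sum_{a_2,a_3,b_2,b_3}\Big(\hat\Phi^{b_2b_3}_{a_2a_3}\hat\Phi^{a_2a_3}_{b_2b_3}+\hat\Phi^{b_2a_3}_{a_2a_3}\hat\Phi^{a_2b_3}_{b_2b_3}+\hat\Phi^{a_2b_3}_{a_2a_3}\hat\Phi^{b_2a_3}_{b_2b_3}\Big).$$ Then $$\frac{\mathcal Z_{\hat{\rm H}\rm T}(\lambda)}{\mathcal Z_{\hat{\rm H}\rm T}(0)}=(1-\lambda)^{-\frac12(N^2-1)^2}\,(1-(1+N)\lambda)^{-(N^2-1)}\,(1-(1+2N)\lambda)^{-\frac12}.$$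
   Context: $\mathrm H(\mathbb C_N^{\otimes2})$ is the space of operators on $\mathbb C_N\otimes\mathbb C_N$ with components $\hat\Phi^{a_2a_3}_{b_2b_3}$ satisfying $\hat\Phi^{a_2a_3}_{b_2b_3}=\overline{\hat\Phi^{b_2b_3}_{a_2a_3}}$, with measure $\prod_{(a_2,a_3)\le(b_2,b_3)}d\hat\Phi^{a_2a_3}_{b_2b_3}$ (lexicographic order). $\mathrm{Tr}(\hat\Phi^2)=\sum\hat\Phi^{a_2a_3}_{b_2b_3}\hat\Phi^{b_2b_3}_{a_2a_3}$. *)

theory Defs
  imports "HOL-Analysis.Analysis"
begin

text \<open>Basis indices of C_N (x) C_N: pairs (a2,a3) with a2,a3 < N.\<close>
type_synonym idx = "nat \<times> nat"

definition idxs :: "nat \<Rightarrow> idx set" where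
  "idxs N = {0..<N} \<times> {0..<N}"

definition lex_less :: "idx \<Rightarrow> idx \<Rightarrow> bool" where
  "lex_less p q \<longleftrightarrow> fst p < fst q \<or> (fst p = fst q \<and> snd p < snd q)"

text \<open>Real coordinates of a self-adjoint operator: for p = q the (real) diagonal entry
  (flag False); for p < q (lexicographically) the real part (flag False) and the
  imaginary part (flag True) of the entry Phi^p_q.  The measure
  prod_{p \<le> q} dPhi^p_q is Lebesgue measure in these coordinates.\<close>
definition coords :: "nat \<Rightarrow> (idx \<times> idx \<times> bool) set" where
  "coords N = {(p, q, False) | p q. p \<in> idxs N \<and> q \<in> idxs N \<and> (p = q \<or> lex_less p q)}
            \<union> {(p, q, True) | p q. p \<in> idxs N \<and> q \<in> idxs N \<and> lex_less p q}"

text \<open>The self-adjoint operator with given coordinates; herm_of x p q is the component Phi^p_q.\<close>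
definition herm_of :: "(idx \<times> idx \<times> bool \<Rightarrow> real) \<Rightarrow> idx \<Rightarrow> idx \<Rightarrow> complex" where
  "herm_of x p q =
     (if p = q then complex_of_real (x (p, p, False))
      else if lex_less p q then Complex (x (p, q, False)) (x (p, q, True))
      else Complex (x (q, p, False)) (- x (q, p, True)))"

definition tr_sq :: "nat \<Rightarrow> (idx \<Rightarrow> idx \<Rightarrow> complex) \<Rightarrow> complex" where
  "tr_sq N \<Phi> = (\<Sum>a\<in>idxs N. \<Sum>b\<in>idxs N. \<Phi> a b * \<Phi> b a)"

definition V4 :: "nat \<Rightarrow> real \<Rightarrow> (idx \<Rightarrow> idx \<Rightarrow> complex) \<Rightarrow> complex" where
  "V4 N lam \<Phi> = of_real (real N * lam / 2) *
     (\<Sum>a2<N. \<Sum>a3<N. \<Sum>b2<N. \<Sum>b3<N.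
        \<Phi> (b2, b3) (a2, a3) * \<Phi> (a2, a3) (b2, b3)
      + \<Phi> (b2, a3) (a2, a3) * \<Phi> (a2, b3) (b2, b3)
      + \<Phi> (a2, b3) (a2, a3) * \<Phi> (b2, a3) (b2, b3))"

definition Z_HT :: "nat \<Rightarrow> real \<Rightarrow> complex" where
  "Z_HT N lam = integral\<^sup>L (PiM (coords N) (\<lambda>_. lborel))
     (\<lambda>x. exp (- (of_nat N / 2) * tr_sq N (herm_of x) + V4 N lam (herm_of x)))"

end

theory Submission
  imports Defs "HOL-Probability.Probability"
begin

lemma gauss1:
  fixes D c :: real assumes D: "D > 0"
  shows "(\<integral>\<^sup>+y. ennreal (exp (- (D * y\<^sup>2 - 2 * c * y))) \<partial>lborel)
          = ennreal (sqrt (pi / D) * exp (c\<^sup>2 / D))"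
proof -
  define \<sigma> where "\<sigma> = sqrt (1 / (2 * D))"
  have \<sigma>: "\<sigma> > 0" using D by (simp add: \<sigma>_def)
  have s2: "\<sigma>\<^sup>2 = 1 / (2 * D)" using D by (simp add: \<sigma>_def)
  have eq: "exp (- (D * y\<^sup>2 - 2 * c * y)) = (sqrt (pi / D) * exp (c\<^sup>2 / D)) * normal_density (c / D) \<sigma> y" for y
  proof -
    have "2 * pi * \<sigma>\<^sup>2 = pi / D" using s2 D by (simp add: field_simps)
    moreover have "-(y - c / D)\<^sup>2/ (2 * \<sigma>\<^sup>2) = - (D * y\<^sup>2 - 2 * c * y) - c\<^sup>2 / D"
      using s2 D by (simp add: field_simps power2_eq_square)
    ultimately have "normal_density (c / D) \<sigma> y = 1 / sqrt (pi / D) * exp (- (D * y\<^sup>2 - 2 * c * y) - c\<^sup>2 / D)"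
      unfolding normal_density_def by simp
    moreover have "sqrt (pi / D) > 0" using D by simp
    ultimately have "(sqrt (pi / D) * exp (c\<^sup>2 / D)) * normal_density (c / D) \<sigma> y
       = exp (- (D * y\<^sup>2 - 2 * c * y) - c\<^sup>2 / D) * exp (c\<^sup>2 / D)" using D by simp
    also have "\<dots> = exp (- (D * y\<^sup>2 - 2 * c * y))" by (simp add: exp_diff)
    finally show ?thesis by simp
  qed
  have "(\<integral>\<^sup>+y. ennreal (exp (- (D * y\<^sup>2 - 2 * c * y))) \<partial>lborel)
      = (\<integral>\<^sup>+y. ennreal (sqrt (pi / D) * exp (c\<^sup>2 / D)) * ennreal (normal_density (c / D) \<sigma> y) \<partial>lborel)"
    by (intro nn_integral_cong, subst eq, subst ennreal_mult) (use D in auto)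
  also have "\<dots> = ennreal (sqrt (pi / D) * exp (c\<^sup>2 / D)) * (\<integral>\<^sup>+y. ennreal (normal_density (c / D) \<sigma> y) \<partial>lborel)"
    by (simp add: nn_integral_cmult)
  also have "(\<integral>\<^sup>+y. ennreal (normal_density (c / D) \<sigma> y) \<partial>lborel) = 1"
    using \<sigma> by (subst nn_integral_eq_integral) (auto simp: integrable_normal_density integral_normal_density)
  finally show ?thesis by simp
qed


lemma PiM_lborel_empty_integral:
  "(\<integral>\<^sup>+x. f x \<partial>PiM {} (\<lambda>_. lborel::real measure)) = f (\<lambda>_. undefined)"
  by (simp add: PiM_empty nn_integral_count_space_finite)

lemma GL_alg:
  fixes X D \<alpha> \<beta> U u w W Y c' :: real
  assumes "X > 0" "D = X + \<beta> * U" "D > 0" "\<alpha> = D + \<beta> * u\<^sup>2" "\<alpha> > 0" "c' = \<beta> * u * w / D"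
  shows "w\<^sup>2 / D + ((W + 2 * c' * Y + c'\<^sup>2 * U)/\<alpha> + (\<alpha> * \<beta> / D) * (Y + c' * U)\<^sup>2 / (\<alpha> * (\<alpha> * X / D)))
       = (w\<^sup>2 + W)/\<alpha> + \<beta> * (u * w + Y)\<^sup>2 / (\<alpha> * X)"
proof -
  have nz: "D \<noteq> 0" "X \<noteq> 0" "\<alpha> \<noteq> 0" using assms by auto
  have t1: "(\<alpha> * \<beta> / D) * (Y + c' * U)\<^sup>2 / (\<alpha> * (\<alpha> * X / D)) = \<beta> * (Y + c' * U)\<^sup>2 / (\<alpha> * X)"
    using nz by (simp add: field_simps power2_eq_square)
  have poly: "\<alpha>*X*w\<^sup>2*D + X*(2*(\<beta>*u*w)*Y*D + (\<beta>*u*w)\<^sup>2*U) + \<beta>*(Y*D + (\<beta>*u*w)*U)\<^sup>2 = X*w\<^sup>2*D\<^sup>2 + \<beta>*(u*w+Y)\<^sup>2*D\<^sup>2"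
    unfolding assms(4) assms(2) by algebra
  have l: "(w\<^sup>2 / D + ((W + 2 * c' * Y + c'\<^sup>2 * U)/\<alpha> + \<beta> * (Y + c' * U)\<^sup>2 / (\<alpha> * X))) * (\<alpha>*X*D\<^sup>2)
     = \<alpha>*X*w\<^sup>2*D + X*W*D\<^sup>2 + (X*(2*(\<beta>*u*w)*Y*D + (\<beta>*u*w)\<^sup>2*U) + \<beta>*(Y*D + (\<beta>*u*w)*U)\<^sup>2)"
    using nz unfolding assms(6) by (simp add: field_simps power2_eq_square)
  have r: "((w\<^sup>2 + W)/\<alpha> + \<beta> * (u * w + Y)\<^sup>2 / (\<alpha> * X)) * (\<alpha>*X*D\<^sup>2) = X*w\<^sup>2*D\<^sup>2 + X*W*D\<^sup>2 + \<beta>*(u*w+Y)\<^sup>2*D\<^sup>2"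
    using nz by (simp add: field_simps power2_eq_square)
  have "(w\<^sup>2 / D + ((W + 2 * c' * Y + c'\<^sup>2 * U)/\<alpha> + \<beta> * (Y + c' * U)\<^sup>2 / (\<alpha> * X))) * (\<alpha>*X*D\<^sup>2)
     = ((w\<^sup>2 + W)/\<alpha> + \<beta> * (u * w + Y)\<^sup>2 / (\<alpha> * X)) * (\<alpha>*X*D\<^sup>2)"
    unfolding l r using poly by linarith
  then show ?thesis unfolding t1 using nz by simp
qed

lemma GL_meas:
  fixes K :: "'k set" and h :: "'k \<Rightarrow> 'c" and u w :: "'k \<Rightarrow> real"
  shows "(\<lambda>x. ennreal (exp (- (\<alpha> * (\<Sum>k\<in>K. (x (h k))\<^sup>2) - \<beta> * (\<Sum>k\<in>K. u k * x (h k))\<^sup>2 - 2 * (\<Sum>k\<in>K. w k * x (h k))))))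
     \<in> borel_measurable (PiM (h ` K) (\<lambda>_. lborel))"
  by measurable

lemma GL:
  fixes K :: "'k set" and h :: "'k \<Rightarrow> 'c" and u w :: "'k \<Rightarrow> real"
  assumes "finite K" "inj_on h K" "\<alpha> > 0" "\<alpha> - \<beta> * (\<Sum>k\<in>K. (u k)\<^sup>2) > 0"
  shows "(\<integral>\<^sup>+x. ennreal (exp (- (\<alpha> * (\<Sum>k\<in>K. (x (h k))\<^sup>2) - \<beta> * (\<Sum>k\<in>K. u k * x (h k))\<^sup>2
                 - 2 * (\<Sum>k\<in>K. w k * x (h k))))) \<partial>PiM (h ` K) (\<lambda>_. lborel))
    = ennreal (sqrt (pi/\<alpha>) ^ card K * sqrt (\<alpha> / (\<alpha> - \<beta> * (\<Sum>k\<in>K. (u k)\<^sup>2)))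
       * exp ((\<Sum>k\<in>K. (w k)\<^sup>2)/\<alpha> + \<beta> * (\<Sum>k\<in>K. u k * w k)\<^sup>2 / (\<alpha> * (\<alpha> - \<beta> * (\<Sum>k\<in>K. (u k)\<^sup>2)))))"
  using assms
proof (induction K arbitrary: \<beta> w rule: finite_induct)
  case empty
  then show ?case by (simp add: space_PiM_empty)
next
  case (insert i K)
  interpret product_sigma_finite "\<lambda>_. lborel :: real measure" by standard
  have inj: "inj_on h K" and hi: "h i \<notin> h ` K" using insert by (auto simp: inj_on_def)
  define U where "U = (\<Sum>k\<in>K. (u k)\<^sup>2)"
  define D where "D = \<alpha> - \<beta> * (u i)\<^sup>2"
  have U0: "U \<ge> 0" unfolding U_def by (simp add: sum_nonneg)
  have Uf: "\<alpha> - \<beta> * ((u i)\<^sup>2 + U) > 0" using insert by (simp add: U_def)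
  have D: "D > 0"
  proof (cases "\<beta> \<le> 0")
    case True then have "\<beta> * (u i)\<^sup>2 \<le> 0" by (simp add: mult_nonpos_nonneg)
    then show ?thesis using insert.prems(2) by (simp add: D_def)
  next
    case False
    then have "\<beta> * (u i)\<^sup>2 \<le> \<beta> * ((u i)\<^sup>2 + U)" using U0 by (simp add: mult_left_mono)
    then show ?thesis using Uf by (simp add: D_def)
  qed
  define \<beta>' where "\<beta>' = \<alpha> * \<beta> / D"
  define c' where "c' = \<beta> * u i * w i / D"
  define w' where "w' = (\<lambda>k. w k + c' * u k)"
  have cond': "\<alpha> - \<beta>' * U > 0"
  proof -
    have "\<alpha> - \<beta>' * U = \<alpha> * (\<alpha> - \<beta> * ((u i)\<^sup>2 + U)) / D"
      using D by (simp add: \<beta>'_def D_def field_simps)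
    then show ?thesis using D Uf insert.prems(2) by simp
  qed
  note IH = insert(3)[OF inj insert(5), of \<beta>' w', folded U_def, OF cond']
  let ?f = "\<lambda>x. ennreal (exp (- (\<alpha> * (\<Sum>k\<in>insert i K. (x (h k))\<^sup>2) - \<beta> * (\<Sum>k\<in>insert i K. u k * x (h k))\<^sup>2
                 - 2 * (\<Sum>k\<in>insert i K. w k * x (h k)))))"
  have meas0: "?f \<in> borel_measurable (PiM (h ` insert i K) (\<lambda>_. lborel))"
    by (rule GL_meas)
  have meas: "?f \<in> borel_measurable (PiM (insert (h i) (h ` K)) (\<lambda>_. lborel))"
    using meas0 by simp
  have "(\<integral>\<^sup>+x. ?f x \<partial>PiM (h ` insert i K) (\<lambda>_. lborel))
     = (\<integral>\<^sup>+x. (\<integral>\<^sup>+y. ?f (x(h i := y)) \<partial>lborel) \<partial>PiM (h ` K) (\<lambda>_. lborel))"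
    using product_nn_integral_insert[OF _ hi meas] insert(1) by simp
  also have "\<dots> = (\<integral>\<^sup>+x. ennreal (sqrt (pi / D) * exp ((w i)\<^sup>2 / D)) *
      ennreal (exp (- (\<alpha> * (\<Sum>k\<in>K. (x (h k))\<^sup>2) - \<beta>' * (\<Sum>k\<in>K. u k * x (h k))\<^sup>2
                 - 2 * (\<Sum>k\<in>K. w' k * x (h k))))) \<partial>PiM (h ` K) (\<lambda>_. lborel))"
  proof (rule nn_integral_cong)
    fix x
    define S where "S = (\<Sum>k\<in>K. u k * x (h k))"
    define Q where "Q = (\<Sum>k\<in>K. (x (h k))\<^sup>2)"
    define P where "P = (\<Sum>k\<in>K. w k * x (h k))"
    define c where "c = \<beta> * u i * S + w i"
    have upd: "\<And>k. k \<in> K \<Longrightarrow> (x(h i := y)) (h k) = x (h k)" for y using hi by (metis fun_upd_other image_eqI)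
    have e1: "?f (x(h i := y)) = ennreal (exp (- (D * y\<^sup>2 - 2 * c * y))) * ennreal (exp (- (\<alpha> * Q - \<beta> * S\<^sup>2 - 2 * P)))" for y
    proof -
      have "(\<Sum>k\<in>insert i K. (x(h i := y)) (h k) ^ 2) = y\<^sup>2 + Q"
        using insert(1,2) upd by (simp add: Q_def)
      moreover have "(\<Sum>k\<in>insert i K. u k * (x(h i := y)) (h k)) = u i * y + S"
        using insert(1,2) upd by (simp add: S_def)
      moreover have "(\<Sum>k\<in>insert i K. w k * (x(h i := y)) (h k)) = w i * y + P"
        using insert(1,2) upd by (simp add: P_def)
      ultimately show ?thesis
        by (simp add: ennreal_mult[symmetric] exp_add[symmetric] D_def c_def power2_eq_square algebra_simps)
    qed
    have "(\<integral>\<^sup>+y. ?f (x(h i := y)) \<partial>lborel) = (\<integral>\<^sup>+y. ennreal (exp (- (D * y\<^sup>2 - 2 * c * y))) \<partial>lborel) * ennreal (exp (- (\<alpha> * Q - \<beta> * S\<^sup>2 - 2 * P)))"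
      unfolding e1 by (simp add: nn_integral_multc)
    also have "\<dots> = ennreal (sqrt (pi / D) * exp (c\<^sup>2 / D)) * ennreal (exp (- (\<alpha> * Q - \<beta> * S\<^sup>2 - 2 * P)))"
      using gauss1[OF D] by simp
    also have "\<dots> = ennreal (sqrt (pi / D) * exp ((w i)\<^sup>2 / D)) * ennreal (exp (- (\<alpha> * Q - \<beta>' * S\<^sup>2 - 2 * (P + c' * S))))"
    proof -
      have "c\<^sup>2 / D - (\<alpha> * Q - \<beta> * S\<^sup>2 - 2 * P) = (w i)\<^sup>2 / D - (\<alpha> * Q - \<beta>' * S\<^sup>2 - 2 * (P + c' * S))"
      proof -
        have b': "\<beta>' = \<beta> + \<beta> * \<beta> * (u i)\<^sup>2 / D" using D by (simp add: \<beta>'_def D_def field_simps)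
        show ?thesis unfolding b' c_def c'_def using D by (simp add: field_simps power2_eq_square)
      qed
      then have "exp (c\<^sup>2 / D) * exp (- (\<alpha> * Q - \<beta> * S\<^sup>2 - 2 * P)) = exp ((w i)\<^sup>2 / D) * exp (- (\<alpha> * Q - \<beta>' * S\<^sup>2 - 2 * (P + c' * S)))"
        by (simp add: exp_add[symmetric])
      then have "sqrt (pi / D) * exp (c\<^sup>2 / D) * exp (- (\<alpha> * Q - \<beta> * S\<^sup>2 - 2 * P)) = sqrt (pi / D) * exp ((w i)\<^sup>2 / D) * exp (- (\<alpha> * Q - \<beta>' * S\<^sup>2 - 2 * (P + c' * S)))"
        by (simp add: mult.assoc)
      then show ?thesis
        apply (subst (1 2) ennreal_mult[symmetric])
        using D by auto
    qed
    also have "P + c' * S = (\<Sum>k\<in>K. w' k * x (h k))"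
      by (simp add: P_def S_def w'_def algebra_simps sum.distrib sum_distrib_left)
    finally show "(\<integral>\<^sup>+y. ?f (x(h i := y)) \<partial>lborel) = ennreal (sqrt (pi / D) * exp ((w i)\<^sup>2 / D)) *
      ennreal (exp (- (\<alpha> * (\<Sum>k\<in>K. (x (h k))\<^sup>2) - \<beta>' * (\<Sum>k\<in>K. u k * x (h k))\<^sup>2
                 - 2 * (\<Sum>k\<in>K. w' k * x (h k)))))" by (simp add: Q_def S_def)
  qed
  also have "\<dots> = ennreal (sqrt (pi / D) * exp ((w i)\<^sup>2 / D)) * ennreal (sqrt (pi/\<alpha>) ^ card K * sqrt (\<alpha> / (\<alpha> - \<beta>' * U))
       * exp ((\<Sum>k\<in>K. (w' k)\<^sup>2)/\<alpha> + \<beta>' * (\<Sum>k\<in>K. u k * w' k)\<^sup>2 / (\<alpha> * (\<alpha> - \<beta>' * U))))"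
    apply (subst nn_integral_cmult) apply (rule GL_meas) apply (subst IH) apply (rule refl) done
  also have "\<dots> = ennreal (sqrt (pi/\<alpha>) ^ card (insert i K) * sqrt (\<alpha> / (\<alpha> - \<beta> * (\<Sum>k\<in>insert i K. (u k)\<^sup>2)))
       * exp ((\<Sum>k\<in>insert i K. (w k)\<^sup>2)/\<alpha> + \<beta> * (\<Sum>k\<in>insert i K. u k * w k)\<^sup>2 / (\<alpha> * (\<alpha> - \<beta> * (\<Sum>k\<in>insert i K. (u k)\<^sup>2)))))"
  proof -
    define W where "W = (\<Sum>k\<in>K. (w k)\<^sup>2)"
    define Y where "Y = (\<Sum>k\<in>K. u k * w k)"
    have sW: "(\<Sum>k\<in>K. (w' k)\<^sup>2) = W + 2 * c' * Y + c'\<^sup>2 * U"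
      by (simp add: W_def Y_def U_def w'_def power2_eq_square algebra_simps sum.distrib sum_distrib_left)
    have sY: "(\<Sum>k\<in>K. u k * w' k) = Y + c' * U"
      by (simp add: Y_def U_def w'_def power2_eq_square algebra_simps sum.distrib sum_distrib_left)
    have ins: "(\<Sum>k\<in>insert i K. (u k)\<^sup>2) = (u i)\<^sup>2 + U" "(\<Sum>k\<in>insert i K. (w k)\<^sup>2) = (w i)\<^sup>2 + W"
       "(\<Sum>k\<in>insert i K. u k * w k) = u i * w i + Y" "card (insert i K) = Suc (card K)"
      using insert(1,2) by (simp_all add: U_def W_def Y_def)
    have a1: "\<alpha> - \<beta>' * U = \<alpha> * (\<alpha> - \<beta> * ((u i)\<^sup>2 + U)) / D"
      using D by (simp add: \<beta>'_def D_def field_simps)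
    have cst: "sqrt (pi / D) * sqrt (\<alpha> / (\<alpha> - \<beta>' * U)) = sqrt (pi/\<alpha>) * sqrt (\<alpha> / (\<alpha> - \<beta> * ((u i)\<^sup>2 + U)))"
    proof -
      have "pi / D * (\<alpha> / (\<alpha> - \<beta>' * U)) = pi/\<alpha> * (\<alpha> / (\<alpha> - \<beta> * ((u i)\<^sup>2 + U)))"
      proof -
        define X where "X = \<alpha> - \<beta> * ((u i)\<^sup>2 + U)"
        have X: "X \<noteq> 0" using Uf by (simp add: X_def)
        show ?thesis unfolding a1 X_def[symmetric] using D insert.prems(2) X by (simp add: field_simps)
      qed
      then show ?thesis by (simp add: real_sqrt_mult[symmetric])
    qed
    have ex: "(w i)\<^sup>2 / D + ((W + 2 * c' * Y + c'\<^sup>2 * U)/\<alpha> + \<beta>' * (Y + c' * U)\<^sup>2 / (\<alpha> * (\<alpha> - \<beta>' * U)))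
       = ((w i)\<^sup>2 + W)/\<alpha> + \<beta> * (u i * w i + Y)\<^sup>2 / (\<alpha> * (\<alpha> - \<beta> * ((u i)\<^sup>2 + U)))"
      unfolding a1 unfolding \<beta>'_def
      by (rule GL_alg) (use D Uf insert.prems(2) in \<open>simp_all add: D_def c'_def algebra_simps\<close>)
    define E1 where "E1 = (W + 2 * c' * Y + c'\<^sup>2 * U)/\<alpha> + \<beta>' * (Y + c' * U)\<^sup>2 / (\<alpha> * (\<alpha> - \<beta>' * U))"
    define E2 where "E2 = ((w i)\<^sup>2 + W)/\<alpha> + \<beta> * (u i * w i + Y)\<^sup>2 / (\<alpha> * (\<alpha> - \<beta> * ((u i)\<^sup>2 + U)))"
    have real: "sqrt (pi / D) * exp ((w i)\<^sup>2 / D) * (sqrt (pi/\<alpha>) ^ card K * sqrt (\<alpha> / (\<alpha> - \<beta>' * U)) * exp E1)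
       = sqrt (pi/\<alpha>) ^ Suc (card K) * sqrt (\<alpha> / (\<alpha> - \<beta> * ((u i)\<^sup>2 + U))) * exp E2"
    proof -
      have "sqrt (pi / D) * exp ((w i)\<^sup>2 / D) * (sqrt (pi/\<alpha>) ^ card K * sqrt (\<alpha> / (\<alpha> - \<beta>' * U)) * exp E1)
          = (sqrt (pi / D) * sqrt (\<alpha> / (\<alpha> - \<beta>' * U))) * sqrt (pi/\<alpha>) ^ card K * exp ((w i)\<^sup>2 / D + E1)"
        by (simp add: exp_add mult_ac)
      also have "\<dots> = (sqrt (pi/\<alpha>) * sqrt (\<alpha> / (\<alpha> - \<beta> * ((u i)\<^sup>2 + U)))) * sqrt (pi/\<alpha>) ^ card K * exp E2"
        using cst ex by (simp add: E1_def E2_def)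
      also have "\<dots> = sqrt (pi/\<alpha>) ^ Suc (card K) * sqrt (\<alpha> / (\<alpha> - \<beta> * ((u i)\<^sup>2 + U))) * exp E2"
        by (simp add: mult_ac)
      finally show ?thesis .
    qed
    have nn1: "0 \<le> sqrt (pi / D) * exp ((w i)\<^sup>2 / D)" using D by simp
    have nn2: "0 \<le> sqrt (pi/\<alpha>) ^ card K * sqrt (\<alpha> / (\<alpha> - \<beta>' * U)) * exp E1"
      using insert.prems(2) cond' by simp
    show ?thesis unfolding ins sW sY E1_def[symmetric] E2_def[symmetric]
      using real nn1 nn2 by (metis ennreal_mult)
  qed
  finally show ?case .
qed


lemma DL_H:
  fixes a b s :: real
  assumes "a - s * b > 0" "a - (s + 1) * b > 0" "a > 0"
  shows "a - a * b / (a - s * b) = a * (a - (s + 1) * b) / (a - s * b)"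
    and "a * b / (a - s * b) + (a * b / (a - s * b))\<^sup>2 / (a - a * b / (a - s * b)) = a * b / (a - (s + 1) * b)"
proof -
  define d where "d = a - s * b"
  define e where "e = a - (s + 1) * b"
  have de: "d = e + b" by (simp add: d_def e_def algebra_simps)
  have nz: "d \<noteq> 0" "e \<noteq> 0" "a \<noteq> 0" using assms by (auto simp: d_def e_def)
  show 1: "a - a * b / (a - s * b) = a * (a - (s + 1) * b) / (a - s * b)"
    unfolding d_def[symmetric] e_def[symmetric] using nz de by (simp add: field_simps)
  have 2: "(a * b / d)\<^sup>2 / (a * e / d) = a * b\<^sup>2 / (d * e)"
    using nz by (simp add: field_simps power2_eq_square)
  have "a * b / d + a * b\<^sup>2 / (d * e) = (a * b * e + a * b\<^sup>2) / (d * e)"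
    using nz by (simp add: field_simps power2_eq_square)
  also have "\<dots> = a * b * d / (d * e)" by (simp add: de algebra_simps power2_eq_square)
  also have "\<dots> = a * b / e" using nz by simp
  finally have 3: "a * b / d + a * b\<^sup>2 / (d * e) = a * b / e" .
  show "a * b / (a - s * b) + (a * b / (a - s * b))\<^sup>2 / (a - a * b / (a - s * b)) = a * b / (a - (s + 1) * b)"
    unfolding 1 unfolding d_def[symmetric] e_def[symmetric] 2 3 ..
qed

lemma DL_gamma:
  fixes a ta b s n \<beta> \<mu> \<gamma> \<alpha> :: real
  assumes n: "n > 0" and ta: "ta = a - n * b" and g: "\<gamma> = (\<mu> - \<beta>) / n" and al: "\<alpha> = a - \<beta>"
    and a0: "\<alpha> \<noteq> 0" and a1: "ta - \<mu> \<noteq> 0"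
  shows "\<gamma> + (2 * \<beta> * \<gamma> + n * \<gamma>\<^sup>2) / \<alpha> + (b + \<gamma>) * (\<beta> + n * \<gamma>)\<^sup>2 / (\<alpha> * (\<alpha> - (b + \<gamma>) * n))
     = ((\<mu> + \<mu>\<^sup>2 / (ta - \<mu>)) - (\<beta> + \<beta>\<^sup>2 / \<alpha>)) / n"
proof -
  have m: "\<beta> + n * \<gamma> = \<mu>" using n g by (simp add: field_simps)
  have q0: "2 * \<beta> * \<gamma> + n * \<gamma>\<^sup>2 = ((\<beta> + n * \<gamma>)\<^sup>2 - \<beta>\<^sup>2) / n" using n by (simp add: field_simps power2_eq_square)
  have q: "2 * \<beta> * \<gamma> + n * \<gamma>\<^sup>2 = (\<mu>\<^sup>2 - \<beta>\<^sup>2) / n" unfolding q0 m ..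
  have r: "\<alpha> - (b + \<gamma>) * n = ta - \<mu>" using n g ta al by (simp add: field_simps)
  have s: "(b + \<gamma>) = (\<alpha> - (ta - \<mu>)) / n" using r n by (simp add: field_simps)
  have gg: "\<gamma> = (\<mu> - \<beta>) / n" by (rule g)
  show ?thesis unfolding m q r unfolding s unfolding gg using n a0 a1 by (simp add: field_simps power2_eq_square)
qed


definition DF :: "real \<Rightarrow> real \<Rightarrow> real \<Rightarrow> real \<Rightarrow> 'r set \<Rightarrow> 'k set \<Rightarrow> ('r \<times> 'k \<Rightarrow> 'c) \<Rightarrow> ('c \<Rightarrow> real) \<Rightarrow> real" where
  "DF a b \<beta> \<gamma> R K e x = a * (\<Sum>i\<in>R. \<Sum>k\<in>K. (x (e (i,k)))\<^sup>2) - b * (\<Sum>i\<in>R. (\<Sum>k\<in>K. x (e (i,k)))\<^sup>2)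
     - \<beta> * (\<Sum>k\<in>K. (\<Sum>i\<in>R. x (e (i,k)))\<^sup>2) - \<gamma> * (\<Sum>i\<in>R. \<Sum>k\<in>K. x (e (i,k)))\<^sup>2"

lemma DF_meas: "(\<lambda>x. ennreal (exp (- DF a b \<beta> \<gamma> R K e x))) \<in> borel_measurable (PiM (e ` (R \<times> K)) (\<lambda>_. lborel))"
  unfolding DF_def by measurable

lemma pos_lin:
  fixes c b t T :: real
  assumes "0 \<le> t" "t \<le> T" "c > 0" "c - T * b > 0"
  shows "c - t * b > 0"
proof (cases "b \<le> 0")
  case True then have "t * b \<le> 0" using assms(1) by (simp add: mult_nonneg_nonpos)
  then show ?thesis using assms by simp
next
  case False then have "t * b \<le> T * b" using assms by (simp add: mult_right_mono)
  then show ?thesis using assms by simp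
qed

definition DV :: "real \<Rightarrow> real \<Rightarrow> nat \<Rightarrow> real \<Rightarrow> nat \<Rightarrow> real" where
  "DV a b n s r = sqrt (pi ^ (n * r) / ((a ^ r * (a - (s + r) * b) / (a - s * b)) ^ (n - 1)
       * ((a - n * b) ^ r * ((a - n * b) - (s + r) * b) / ((a - n * b) - s * b))))"

lemma DV_nonneg:
  assumes "a > 0" "a - n * b > 0" "a - s * b > 0" "(a - n * b) - s * b > 0" "a - (s + r) * b > 0" "(a - n * b) - (s + r) * b > 0"
  shows "DV a b n s r \<ge> 0"
  unfolding DV_def using assms by (intro real_sqrt_ge_zero divide_nonneg_pos mult_pos_pos zero_less_power) auto

lemma DV_step:
  fixes a b s :: real and n r :: nat
  assumes n: "n \<ge> 1" and p: "a - s * b > 0" "a - (s + 1) * b > 0" "(a - n * b) - s * b > 0" "(a - n * b) - (s + 1) * b > 0"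
    "a - (s + 1 + r) * b > 0" "(a - n * b) - (s + 1 + r) * b > 0" "a > 0" "a - n * b > 0"
  shows "DV a b n s (Suc r) = sqrt (pi / (a * (a - (s + 1) * b) / (a - s * b))) ^ n
      * sqrt ((a * (a - (s + 1) * b) / (a - s * b)) / ((a - n * b) * ((a - n * b) - (s + 1) * b) / ((a - n * b) - s * b)))
      * DV a b n (s + 1) r"
proof -
  define ta where "ta = a - n * b"
  define \<alpha> where "\<alpha> = a * (a - (s + 1) * b) / (a - s * b)"
  define Z where "Z = ta * (ta - (s + 1) * b) / (ta - s * b)"
  define P1 where "P1 = a ^ r * (a - (s + 1 + r) * b) / (a - (s + 1) * b)"
  define P2 where "P2 = ta ^ r * (ta - (s + 1 + r) * b) / (ta - (s + 1) * b)"
  have pos: "\<alpha> > 0" "Z > 0" "P1 > 0" "P2 > 0" using p unfolding \<alpha>_def Z_def P1_def P2_def ta_def by auto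
  have gen: "c ^ Suc r * (c - (s + real (Suc r)) * b) / (c - s * b) = 
     (c * (c - (s + 1) * b) / (c - s * b)) * (c ^ r * (c - (s + 1 + r) * b) / (c - (s + 1) * b))"
    if "c - (s + 1) * b \<noteq> 0" "c - s * b \<noteq> 0" for c
  proof -
    define d where "d = c - s * b"
    define e where "e = c - (s + 1) * b"
    define f where "f = c - (s + 1 + r) * b"
    have eq: "c - (s + real (Suc r)) * b = f" by (simp add: f_def algebra_simps)
    have "e \<noteq> 0" "d \<noteq> 0" using that by (simp_all add: e_def d_def)
    then show ?thesis unfolding eq d_def[symmetric] e_def[symmetric] f_def[symmetric]
      by (simp add: field_simps)
  qed
  have e1: "a ^ Suc r * (a - (s + real (Suc r)) * b) / (a - s * b) = \<alpha> * P1"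
    unfolding \<alpha>_def P1_def using p by (intro gen) auto
  have e2: "ta ^ Suc r * (ta - (s + real (Suc r)) * b) / (ta - s * b) = Z * P2"
    unfolding Z_def P2_def using p by (intro gen) (auto simp: ta_def)
  have lhs: "DV a b n s (Suc r) = sqrt (pi ^ (n * Suc r) / ((\<alpha> * P1) ^ (n - 1) * (Z * P2)))"
    unfolding DV_def ta_def[symmetric] e1 e2 ..
  have rhs2: "DV a b n (s + 1) r = sqrt (pi ^ (n * r) / (P1 ^ (n - 1) * P2))"
    unfolding DV_def ta_def[symmetric] P1_def P2_def by (simp add: add_ac)
  have c: "sqrt (pi / \<alpha>) ^ n * sqrt (\<alpha> / Z) = sqrt (pi ^ n / (\<alpha> ^ (n - 1) * Z))"
  proof -
    obtain m where m: "n = Suc m" using n by (cases n) auto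
    have "sqrt (pi / \<alpha>) ^ n * sqrt (\<alpha> / Z) = sqrt ((pi / \<alpha>) ^ n * (\<alpha> / Z))"
      by (simp only: real_sqrt_power real_sqrt_mult)
    also have "(pi / \<alpha>) ^ n * (\<alpha> / Z) = pi ^ n / (\<alpha> ^ (n - 1) * Z)"
      unfolding m using pos by (simp add: field_simps power_divide)
    finally show ?thesis .
  qed
  show ?thesis
    unfolding lhs rhs2 \<alpha>_def[symmetric] ta_def[symmetric] Z_def[symmetric] c
    unfolding real_sqrt_mult[symmetric]
    using pos by (simp add: power_mult_distrib power_add field_simps)
qed


lemma pos2:
  fixes c b T m :: real
  assumes "c > 0" "c - m * b - T * b > 0" "m \<ge> 0" "T \<ge> 0"
  shows "c - T * b > 0"
proof (cases "b \<le> 0")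
  case True then have "T * b \<le> 0" using assms by (simp add: mult_nonneg_nonpos)
  then show ?thesis using assms by simp
next
  case False then have "m * b \<ge> 0" using assms by simp
  then show ?thesis using assms by simp
qed

lemma ex_alg:
  fixes \<alpha> Z \<beta> S2 c Y g m a Q b R2 \<gamma> :: real
  assumes "\<alpha> \<noteq> 0" "Z \<noteq> 0"
  shows "(\<beta>\<^sup>2 * S2 + c * Y\<^sup>2)/\<alpha> + g * (m * Y)\<^sup>2 / (\<alpha> * Z) - (a * Q - b * R2 - \<beta> * S2 - \<gamma> * Y\<^sup>2)
     = - (a * Q - b * R2 - (\<beta> + \<beta>\<^sup>2 / \<alpha>) * S2 - (\<gamma> + c / \<alpha> + g * m\<^sup>2 / (\<alpha> * Z)) * Y\<^sup>2)"
  using assms by (simp add: field_simps power_mult_distrib)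

lemma DL:
  fixes a b s :: real and R :: "'r set" and K :: "'k set" and e :: "'r \<times> 'k \<Rightarrow> 'c"
  assumes "finite R" "finite K" "card K = n" "n \<ge> 1" "inj_on e (R \<times> K)"
    "a > 0" "a - n * b > 0" "s \<ge> 0" "(a - n * b) - (s + card R) * b > 0"
  shows "(\<integral>\<^sup>+x. ennreal (exp (- DF a b (a * b / (a - s * b))
            (((a - n * b) * b / ((a - n * b) - s * b) - a * b / (a - s * b)) / n) R K e x))
          \<partial>PiM (e ` (R \<times> K)) (\<lambda>_. lborel)) = ennreal (DV a b n s (card R))"
  using assms
proof (induction R arbitrary: s rule: finite_induct)
  case empty
  have "(a - n * b) - s * b > 0" using empty by auto
  moreover have "a - s * b > 0" using pos2[of a n b s] empty by auto
  ultimately show ?case by (simp add: space_PiM_empty DF_def DV_def)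
next
  case (insert i R)
  interpret product_sigma_finite "\<lambda>_. lborel :: real measure" by standard
  define ta where "ta = a - n * b"
  define \<beta> where "\<beta> = a * b / (a - s * b)"
  define \<mu> where "\<mu> = ta * b / (ta - s * b)"
  define \<gamma> where "\<gamma> = (\<mu> - \<beta>) / n"
  define \<alpha> where "\<alpha> = a - \<beta>"
  have n: "real n > 0" "real n \<ge> 1" using insert by auto
  have cR: "card (insert i R) = Suc (card R)" using insert by simp
  have T: "ta - (s + 1 + card R) * b > 0" using insert.prems cR by (simp add: ta_def add_ac)
  have ta0: "ta > 0" using insert.prems by (simp add: ta_def)
  have TA: "a - (s + 1 + card R) * b > 0"
    using pos2[of a n b "s + 1 + card R"] T insert.prems by (simp add: ta_def)
  have p1: "a - s * b > 0" "a - (s + 1) * b > 0"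
    using pos_lin[of s "s + 1 + card R" a b] pos_lin[of "s+1" "s + 1 + card R" a b] TA insert.prems by auto
  have p2: "ta - s * b > 0" "ta - (s + 1) * b > 0"
    using pos_lin[of s "s + 1 + card R" ta b] pos_lin[of "s+1" "s + 1 + card R" ta b] T ta0 insert.prems by auto
  have al: "\<alpha> = a * (a - (s + 1) * b) / (a - s * b)"
    unfolding \<alpha>_def \<beta>_def using DL_H(1)[of a s b] p1 insert.prems by simp
  have al0: "\<alpha> > 0" unfolding al using p1 insert.prems by simp
  have Zeq: "\<alpha> - (b + \<gamma>) * n = ta - \<mu>" using n by (simp add: \<alpha>_def \<gamma>_def ta_def field_simps)
  have Z: "\<alpha> - (b + \<gamma>) * n = ta * (ta - (s + 1) * b) / (ta - s * b)"
  proof -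
    note Zeq
    also have "\<dots> = ta * (ta - (s + 1) * b) / (ta - s * b)"
      unfolding \<mu>_def using DL_H(1)[of ta s b] p2 ta0 by simp
    finally show ?thesis .
  qed
  have Z0: "\<alpha> - (b + \<gamma>) * n > 0" unfolding Z using p2 ta0 by simp
  have bnext: "\<beta> + \<beta>\<^sup>2 / \<alpha> = a * b / (a - (s + 1) * b)"
    unfolding \<alpha>_def \<beta>_def using DL_H(2)[of a s b] p1 insert.prems by simp
  have mnext: "\<mu> + \<mu>\<^sup>2 / (ta - \<mu>) = ta * b / (ta - (s + 1) * b)"
    unfolding \<mu>_def using DL_H(2)[of ta s b] p2 ta0 by simp
  have tamu: "ta - \<mu> \<noteq> 0" using Z0 Zeq by simp
  have gnext: "\<gamma> + (2 * \<beta> * \<gamma> + n * \<gamma>\<^sup>2) / \<alpha> + (b + \<gamma>) * (\<beta> + n * \<gamma>)\<^sup>2 / (\<alpha> * (\<alpha> - (b + \<gamma>) * n))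
     = (ta * b / (ta - (s + 1) * b) - a * b / (a - (s + 1) * b)) / n"
    using DL_gamma[of n ta a b \<gamma> \<mu> \<beta> \<alpha>, OF n(1) ta_def \<gamma>_def \<alpha>_def _ tamu] al0 mnext bnext by simp
  define I where "I = e ` (R \<times> K)"
  define J where "J = (\<lambda>k. e (i, k)) ` K"
  have inj: "inj_on e (insert i R \<times> K)" using insert.prems by simp
  have injR: "inj_on e (R \<times> K)" using inj by (rule inj_on_subset) auto
  have injK: "inj_on (\<lambda>k. e (i, k)) K" using inj by (auto simp: inj_on_def)
  have IJ: "I \<inter> J = {}"
  proof (rule ccontr)
    assume "I \<inter> J \<noteq> {}"
    then obtain i' k k' where "i' \<in> R" "k \<in> K" "k' \<in> K" "e (i', k) = e (i, k')" by (auto simp: I_def J_def)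
    then have "(i', k) = (i, k')" using inj by (auto simp: inj_on_def)
    then show False using \<open>i' \<in> R\<close> insert(2) by simp
  qed
  have UIJ: "e ` (insert i R \<times> K) = I \<union> J" by (auto simp: I_def J_def)
  have finIJ: "finite I" "finite J" using insert(1) insert.prems(1) by (auto simp: I_def J_def)
  define \<beta>' where "\<beta>' = a * b / (a - (s + 1) * b)"
  define \<gamma>' where "\<gamma>' = (ta * b / (ta - (s + 1) * b) - a * b / (a - (s + 1) * b)) / n"
  define C where "C = sqrt (pi / \<alpha>) ^ n * sqrt (\<alpha> / (\<alpha> - (b + \<gamma>) * n))"
  let ?f = "\<lambda>x. ennreal (exp (- DF a b \<beta> \<gamma> (insert i R) K e x))"
  have meas: "?f \<in> borel_measurable (PiM (I \<union> J) (\<lambda>_. lborel))"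
    using DF_meas[of a b \<beta> \<gamma> "insert i R" K e] unfolding UIJ .
  have "(\<integral>\<^sup>+x. ?f x \<partial>PiM (e ` (insert i R \<times> K)) (\<lambda>_. lborel))
      = (\<integral>\<^sup>+x. (\<integral>\<^sup>+y. ?f (merge I J (x, y)) \<partial>PiM J (\<lambda>_. lborel)) \<partial>PiM I (\<lambda>_. lborel))"
    unfolding UIJ by (rule product_nn_integral_fold[OF IJ finIJ meas])
  also have "\<dots> = (\<integral>\<^sup>+x. ennreal C * ennreal (exp (- DF a b \<beta>' \<gamma>' R K e x)) \<partial>PiM I (\<lambda>_. lborel))"
  proof (rule nn_integral_cong)
    fix x :: "'c \<Rightarrow> real"
    define yk where "yk = (\<lambda>k. \<Sum>i'\<in>R. x (e (i', k)))"
    define Y where "Y = (\<Sum>i'\<in>R. \<Sum>k\<in>K. x (e (i', k)))"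
    define w where "w = (\<lambda>k. \<beta> * yk k + \<gamma> * Y)"
    define Q where "Q = (\<Sum>i'\<in>R. \<Sum>k\<in>K. (x (e (i', k)))\<^sup>2)"
    define R2 where "R2 = (\<Sum>i'\<in>R. (\<Sum>k\<in>K. x (e (i', k)))\<^sup>2)"
    define S2 where "S2 = (\<Sum>k\<in>K. (yk k)\<^sup>2)"
    define Rest where "Rest = a * Q - b * R2 - \<beta> * S2 - \<gamma> * Y\<^sup>2"
    have Yk: "Y = (\<Sum>k\<in>K. yk k)" unfolding Y_def yk_def by (rule sum.swap)
    have inner: "?f (merge I J (x, y)) = ennreal (exp (- (\<alpha> * (\<Sum>k\<in>K. (y (e (i, k)))\<^sup>2)
        - (b + \<gamma>) * (\<Sum>k\<in>K. 1 * y (e (i, k)))\<^sup>2 - 2 * (\<Sum>k\<in>K. w k * y (e (i, k)))))) * ennreal (exp (- Rest))" for y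
    proof -
      let ?z = "merge I J (x, y)"
      have zx: "?z (e (i', k)) = x (e (i', k))" if "i' \<in> R" "k \<in> K" for i' k
        using IJ that by (simp add: I_def)
      have zy: "?z (e (i, k)) = y (e (i, k))" if "k \<in> K" for k
        using IJ that by (simp add: J_def)
      define V1 where "V1 = (\<Sum>k\<in>K. (y (e (i, k)))\<^sup>2)"
      define V where "V = (\<Sum>k\<in>K. y (e (i, k)))"
      define VY where "VY = (\<Sum>k\<in>K. y (e (i, k)) * yk k)"
      have d1: "(\<Sum>i'\<in>insert i R. \<Sum>k\<in>K. (?z (e (i', k)))\<^sup>2) = V1 + Q"
        using insert(1,2) zx zy by (simp add: V1_def Q_def)
      have d2: "(\<Sum>i'\<in>insert i R. (\<Sum>k\<in>K. ?z (e (i', k)))\<^sup>2) = V\<^sup>2 + R2"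
        using insert(1,2) zx zy by (simp add: V_def R2_def)
      have d3: "(\<Sum>k\<in>K. (\<Sum>i'\<in>insert i R. ?z (e (i', k)))\<^sup>2) = V1 + 2 * VY + S2"
      proof -
        have "(\<Sum>k\<in>K. (\<Sum>i'\<in>insert i R. ?z (e (i', k)))\<^sup>2) = (\<Sum>k\<in>K. (y (e (i, k)) + yk k)\<^sup>2)"
          using insert(1,2) zx zy by (intro sum.cong) (simp_all add: yk_def)
        also have "\<dots> = V1 + 2 * VY + S2"
          by (simp add: V1_def VY_def S2_def power2_sum sum.distrib sum_distrib_left mult.assoc)
        finally show ?thesis .
      qed
      have d4: "(\<Sum>i'\<in>insert i R. \<Sum>k\<in>K. ?z (e (i', k))) = V + Y"
        using insert(1,2) zx zy by (simp add: V_def Y_def)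
      have d5: "(\<Sum>k\<in>K. w k * y (e (i, k))) = \<beta> * VY + \<gamma> * Y * V"
        by (simp add: w_def VY_def V_def algebra_simps sum.distrib sum_distrib_left)
      have "DF a b \<beta> \<gamma> (insert i R) K e ?z = (\<alpha> * V1 - (b + \<gamma>) * V\<^sup>2 - 2 * (\<beta> * VY + \<gamma> * Y * V)) + Rest"
        unfolding DF_def d1 d2 d3 d4 Rest_def \<alpha>_def by (simp add: power2_sum algebra_simps)
      then have "exp (- DF a b \<beta> \<gamma> (insert i R) K e ?z) = exp (- (\<alpha> * V1 - (b + \<gamma>) * V\<^sup>2 - 2 * (\<beta> * VY + \<gamma> * Y * V))) * exp (- Rest)"
        by (simp add: exp_add[symmetric])
      then show ?thesis unfolding d5[symmetric] unfolding V1_def V_def by (simp add: ennreal_mult)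
    qed
    have GLa: "(\<integral>\<^sup>+y. ennreal (exp (- (\<alpha> * (\<Sum>k\<in>K. (y (e (i, k)))\<^sup>2)
        - (b + \<gamma>) * (\<Sum>k\<in>K. 1 * y (e (i, k)))\<^sup>2 - 2 * (\<Sum>k\<in>K. w k * y (e (i, k)))))) \<partial>PiM J (\<lambda>_. lborel))
      = ennreal (sqrt (pi/\<alpha>) ^ card K * sqrt (\<alpha> / (\<alpha> - (b + \<gamma>) * (\<Sum>k\<in>K. 1\<^sup>2)))
       * exp ((\<Sum>k\<in>K. (w k)\<^sup>2)/\<alpha> + (b + \<gamma>) * (\<Sum>k\<in>K. 1 * w k)\<^sup>2 / (\<alpha> * (\<alpha> - (b + \<gamma>) * (\<Sum>k\<in>K. 1\<^sup>2)))))"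
      unfolding J_def
      by (rule GL[OF insert.prems(1) injK al0, of "b + \<gamma>" "\<lambda>_. 1" w]) (use Z0 insert.prems(2) in simp)
    have sw2: "(\<Sum>k\<in>K. (w k)\<^sup>2) = \<beta>\<^sup>2 * S2 + (2 * \<beta> * \<gamma> + n * \<gamma>\<^sup>2) * Y\<^sup>2"
    proof -
      have wk: "(w k)\<^sup>2 = \<beta>\<^sup>2 * (yk k)\<^sup>2 + (2 * \<beta> * \<gamma> * Y) * yk k + \<gamma>\<^sup>2 * Y\<^sup>2" for k
        by (simp add: w_def power2_eq_square algebra_simps)
      have "(\<Sum>k\<in>K. (w k)\<^sup>2) = \<beta>\<^sup>2 * S2 + 2 * \<beta> * \<gamma> * Y * (\<Sum>k\<in>K. yk k) + card K * \<gamma>\<^sup>2 * Y\<^sup>2"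
        unfolding wk by (simp add: S2_def sum.distrib sum_distrib_left[symmetric])
      then show ?thesis unfolding Yk[symmetric] using insert.prems(2) by (simp add: power2_eq_square algebra_simps)
    qed
    have sw1: "(\<Sum>k\<in>K. 1 * w k) = (\<beta> + n * \<gamma>) * Y"
      unfolding w_def using insert.prems(2) by (simp add: sum.distrib sum_distrib_left[symmetric] Yk[symmetric] algebra_simps)
    have Zn: "\<alpha> - (b + \<gamma>) * n \<noteq> 0" using Z0 by simp
    have ex: "(\<beta>\<^sup>2 * S2 + (2 * \<beta> * \<gamma> + n * \<gamma>\<^sup>2) * Y\<^sup>2)/\<alpha> + (b + \<gamma>) * ((\<beta> + n * \<gamma>) * Y)\<^sup>2 / (\<alpha> * (\<alpha> - (b + \<gamma>) * n)) - Rest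
        = - DF a b \<beta>' \<gamma>' R K e x"
    proof -
      have dfx: "DF a b \<beta>' \<gamma>' R K e x = a * Q - b * R2 - \<beta>' * S2 - \<gamma>' * Y\<^sup>2"
        unfolding DF_def Q_def R2_def S2_def Y_def yk_def ..
      have b': "\<beta>' = \<beta> + \<beta>\<^sup>2 / \<alpha>" unfolding \<beta>'_def bnext ..
      have g': "\<gamma>' = \<gamma> + (2 * \<beta> * \<gamma> + n * \<gamma>\<^sup>2) / \<alpha> + (b + \<gamma>) * (\<beta> + n * \<gamma>)\<^sup>2 / (\<alpha> * (\<alpha> - (b + \<gamma>) * n))"
        unfolding \<gamma>'_def gnext ..
      show ?thesis unfolding dfx Rest_def unfolding b' g'
        by (rule ex_alg[of \<alpha> "\<alpha> - (b + \<gamma>) * n" \<beta> S2 "2 * \<beta> * \<gamma> + n * \<gamma>\<^sup>2" Y "b + \<gamma>" "\<beta> + n * \<gamma>" a Q b R2 \<gamma>])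
           (use al0 Zn in auto)
    qed
    have "(\<integral>\<^sup>+y. ?f (merge I J (x, y)) \<partial>PiM J (\<lambda>_. lborel))
       = (\<integral>\<^sup>+y. ennreal (exp (- (\<alpha> * (\<Sum>k\<in>K. (y (e (i, k)))\<^sup>2)
        - (b + \<gamma>) * (\<Sum>k\<in>K. 1 * y (e (i, k)))\<^sup>2 - 2 * (\<Sum>k\<in>K. w k * y (e (i, k)))))) \<partial>PiM J (\<lambda>_. lborel)) * ennreal (exp (- Rest))"
      unfolding inner by (rule nn_integral_multc) (unfold J_def, rule GL_meas)
    also have "\<dots> = ennreal (C * exp ((\<Sum>k\<in>K. (w k)\<^sup>2)/\<alpha> + (b + \<gamma>) * (\<Sum>k\<in>K. 1 * w k)\<^sup>2 / (\<alpha> * (\<alpha> - (b + \<gamma>) * n)))) * ennreal (exp (- Rest))"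
      unfolding GLa using insert.prems(2) by (simp add: C_def mult.assoc)
    also have "\<dots> = ennreal C * ennreal (exp (- DF a b \<beta>' \<gamma>' R K e x))"
    proof -
      have C0: "C \<ge> 0" unfolding C_def using al0 Z0 by simp
      have "C * exp ((\<Sum>k\<in>K. (w k)\<^sup>2)/\<alpha> + (b + \<gamma>) * (\<Sum>k\<in>K. 1 * w k)\<^sup>2 / (\<alpha> * (\<alpha> - (b + \<gamma>) * n))) * exp (- Rest)
          = C * exp (- DF a b \<beta>' \<gamma>' R K e x)"
        unfolding sw1 sw2 ex[symmetric] by (simp add: exp_diff exp_minus field_simps)
      then show ?thesis using C0 by (simp add: ennreal_mult[symmetric])
    qed
    finally show "(\<integral>\<^sup>+y. ?f (merge I J (x, y)) \<partial>PiM J (\<lambda>_. lborel)) = ennreal C * ennreal (exp (- DF a b \<beta>' \<gamma>' R K e x))" .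
  qed
  also have "\<dots> = ennreal C * ennreal (DV a b n (s + 1) (card R))"
  proof -
    have "(\<integral>\<^sup>+x. ennreal (exp (- DF a b \<beta>' \<gamma>' R K e x)) \<partial>PiM I (\<lambda>_. lborel)) = ennreal (DV a b n (s + 1) (card R))"
      unfolding I_def \<beta>'_def \<gamma>'_def ta_def
      by (rule insert.IH) (use insert.prems injR T in \<open>simp_all add: ta_def add_ac\<close>)
    then show ?thesis by (subst nn_integral_cmult) (simp_all add: I_def DF_meas)
  qed
  also have "\<dots> = ennreal (DV a b n s (card (insert i R)))"
  proof -
    have "DV a b n s (Suc (card R)) = C * DV a b n (s + 1) (card R)"
      unfolding C_def Z unfolding al ta_def
      by (rule DV_step) (use insert.prems p1 p2 TA T ta0 in \<open>simp_all add: ta_def add_ac\<close>)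
    moreover have "C \<ge> 0" unfolding C_def using al0 Z0 by simp
    moreover have "DV a b n (s + 1) (card R) \<ge> 0"
      by (rule DV_nonneg) (use insert.prems p1 p2 TA T ta0 in \<open>simp_all add: ta_def add_ac\<close>)
    ultimately show ?thesis unfolding cR by (simp add: ennreal_mult)
  qed
  finally show ?case unfolding \<beta>_def \<gamma>_def \<mu>_def ta_def .
qed


lemma BP_meas:
  fixes B :: "'j \<Rightarrow> 'c set" and f :: "'j \<Rightarrow> ('c \<Rightarrow> real) \<Rightarrow> ennreal"
  assumes "j \<in> J" "B j \<subseteq> A"
    "f j \<in> borel_measurable (PiM (B j) (\<lambda>_. lborel))"
    "\<And>x y. (\<And>c. c \<in> B j \<Longrightarrow> x c = y c) \<Longrightarrow> f j x = f j y"
  shows "f j \<in> borel_measurable (PiM A (\<lambda>_. lborel))"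
proof -
  have eq: "f j = (\<lambda>x. f j (restrict x (B j)))"
    by (rule ext, rule assms(4)) simp
  have "(\<lambda>x. f j (restrict x (B j))) \<in> borel_measurable (PiM A (\<lambda>_. lborel))"
    using measurable_comp[OF measurable_restrict_subset[OF assms(2)] assms(3)] by (simp add: comp_def)
  then show ?thesis using eq by simp
qed

lemma BP:
  fixes B :: "'j \<Rightarrow> 'c set" and f :: "'j \<Rightarrow> ('c \<Rightarrow> real) \<Rightarrow> ennreal"
  assumes "finite J" "\<And>j. j \<in> J \<Longrightarrow> finite (B j)" "disjoint_family_on B J"
    "\<And>j. j \<in> J \<Longrightarrow> f j \<in> borel_measurable (PiM (B j) (\<lambda>_. lborel))"
    "\<And>j x y. j \<in> J \<Longrightarrow> (\<And>c. c \<in> B j \<Longrightarrow> x c = y c) \<Longrightarrow> f j x = f j y"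
  shows "(\<integral>\<^sup>+x. (\<Prod>j\<in>J. f j x) \<partial>PiM (\<Union>j\<in>J. B j) (\<lambda>_. lborel))
       = (\<Prod>j\<in>J. \<integral>\<^sup>+x. f j x \<partial>PiM (B j) (\<lambda>_. lborel))"
  using assms
proof (induction J rule: finite_induct)
  case empty
  show ?case by (simp add: space_PiM_empty)
next
  case (insert j J)
  interpret product_sigma_finite "\<lambda>_. lborel :: real measure" by standard
  define I where "I = B j"
  define U where "U = (\<Union>j\<in>J. B j)"
  have IU: "I \<inter> U = {}"
    using insert.prems(2) insert(2) unfolding I_def U_def disjoint_family_on_def by fastforce
  have fin: "finite I" "finite U" using insert(1) insert.prems(1) by (auto simp: I_def U_def)
  have un: "(\<Union>j\<in>insert j J. B j) = I \<union> U" by (simp add: I_def U_def)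
  have measj: "f j' \<in> borel_measurable (PiM (I \<union> U) (\<lambda>_. lborel))" if "j' \<in> insert j J" for j'
  proof (rule BP_meas[of j' "insert j J"])
    show "j' \<in> insert j J" by (rule that)
    show "B j' \<subseteq> I \<union> U" using that by (auto simp: I_def U_def)
    show "f j' \<in> borel_measurable (PiM (B j') (\<lambda>_. lborel))" by (rule insert.prems(3)[OF that])
    show "\<And>x y. (\<And>c. c \<in> B j' \<Longrightarrow> x c = y c) \<Longrightarrow> f j' x = f j' y" by (rule insert.prems(4)[OF that])
  qed
  have meas: "(\<lambda>x. \<Prod>j\<in>insert j J. f j x) \<in> borel_measurable (PiM (I \<union> U) (\<lambda>_. lborel))"
    using measj by (intro borel_measurable_prod_ennreal) auto
  have IH: "(\<integral>\<^sup>+x. (\<Prod>j\<in>J. f j x) \<partial>PiM U (\<lambda>_. lborel)) = (\<Prod>j\<in>J. \<integral>\<^sup>+x. f j x \<partial>PiM (B j) (\<lambda>_. lborel))"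
    unfolding U_def
  proof (rule insert.IH)
    show "\<And>j. j \<in> J \<Longrightarrow> finite (B j)" using insert.prems(1) by simp
    show "disjoint_family_on B J" using insert.prems(2) by (auto simp: disjoint_family_on_def)
    show "\<And>j. j \<in> J \<Longrightarrow> f j \<in> borel_measurable (PiM (B j) (\<lambda>_. lborel))" using insert.prems(3) by simp
    show "\<And>j x y. j \<in> J \<Longrightarrow> (\<And>c. c \<in> B j \<Longrightarrow> x c = y c) \<Longrightarrow> f j x = f j y"
      using insert.prems(4) by (metis insertCI)
  qed
  have measU: "(\<lambda>x. \<Prod>j\<in>J. f j x) \<in> borel_measurable (PiM U (\<lambda>_. lborel))"
  proof (intro borel_measurable_prod_ennreal)
    fix j' assume "j' \<in> J"
    show "f j' \<in> borel_measurable (PiM U (\<lambda>_. lborel))"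
    proof (rule BP_meas[of j' J])
      show "j' \<in> J" by fact
      show "B j' \<subseteq> U" using \<open>j' \<in> J\<close> by (auto simp: U_def)
      show "f j' \<in> borel_measurable (PiM (B j') (\<lambda>_. lborel))" using insert.prems(3) \<open>j' \<in> J\<close> by simp
      show "\<And>x y. (\<And>c. c \<in> B j' \<Longrightarrow> x c = y c) \<Longrightarrow> f j' x = f j' y"
        using insert.prems(4) \<open>j' \<in> J\<close> by (metis insertCI)
    qed
  qed
  have "(\<integral>\<^sup>+x. (\<Prod>j\<in>insert j J. f j x) \<partial>PiM (\<Union>j\<in>insert j J. B j) (\<lambda>_. lborel))
     = (\<integral>\<^sup>+x. (\<integral>\<^sup>+y. (\<Prod>j\<in>insert j J. f j (merge I U (x, y))) \<partial>PiM U (\<lambda>_. lborel)) \<partial>PiM I (\<lambda>_. lborel))"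
    unfolding un by (rule product_nn_integral_fold[OF IU fin meas])
  also have "\<dots> = (\<integral>\<^sup>+x. f j x * (\<integral>\<^sup>+y. (\<Prod>j\<in>J. f j y) \<partial>PiM U (\<lambda>_. lborel)) \<partial>PiM I (\<lambda>_. lborel))"
  proof (rule nn_integral_cong)
    fix x :: "'c \<Rightarrow> real"
    have e1: "f j (merge I U (x, y)) = f j x" for y
      by (rule insert.prems(4)) (use IU in \<open>auto simp: I_def\<close>)
    have e2: "f j' (merge I U (x, y)) = f j' y" if "j' \<in> J" for y j'
    proof (rule insert.prems(4))
      show "j' \<in> insert j J" using that by simp
      fix c assume c: "c \<in> B j'"
      then have "c \<in> U" using that by (auto simp: U_def)
      then show "merge I U (x, y) c = y c" using IU by simp
    qed
    have "(\<integral>\<^sup>+y. (\<Prod>j\<in>insert j J. f j (merge I U (x, y))) \<partial>PiM U (\<lambda>_. lborel))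
        = (\<integral>\<^sup>+y. f j x * (\<Prod>j\<in>J. f j y) \<partial>PiM U (\<lambda>_. lborel))"
      using insert(1,2) e1 e2 by (intro nn_integral_cong) simp
    also have "\<dots> = f j x * (\<integral>\<^sup>+y. (\<Prod>j\<in>J. f j y) \<partial>PiM U (\<lambda>_. lborel))"
      by (rule nn_integral_cmult[OF measU])
    finally show "(\<integral>\<^sup>+y. (\<Prod>j\<in>insert j J. f j (merge I U (x, y))) \<partial>PiM U (\<lambda>_. lborel))
        = f j x * (\<integral>\<^sup>+y. (\<Prod>j\<in>J. f j y) \<partial>PiM U (\<lambda>_. lborel))" .
  qed
  also have "\<dots> = (\<integral>\<^sup>+x. f j x \<partial>PiM I (\<lambda>_. lborel)) * (\<integral>\<^sup>+y. (\<Prod>j\<in>J. f j y) \<partial>PiM U (\<lambda>_. lborel))"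
    by (rule nn_integral_multc) (use insert.prems(3) in \<open>simp add: I_def\<close>)
  also have "\<dots> = (\<Prod>j\<in>insert j J. \<integral>\<^sup>+x. f j x \<partial>PiM (B j) (\<lambda>_. lborel))"
    unfolding IH using insert(1,2) by (simp add: I_def)
  finally show ?case .
qed


lemma lex_total: "p \<noteq> q \<Longrightarrow> lex_less p q \<or> lex_less q p"
  by (cases p, cases q) (auto simp: lex_less_def)

lemma lex_asym: "lex_less p q \<Longrightarrow> \<not> lex_less q p"
  by (cases p, cases q) (auto simp: lex_less_def)

lemma herm_cnj: "herm_of x q p = cnj (herm_of x p q)"
proof (cases "p = q")
  case True then show ?thesis by (simp add: herm_of_def)
next
  case False
  then consider "lex_less p q" | "lex_less q p" using lex_total by blast
  then show ?thesis
  proof cases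
    case 1 then show ?thesis using False lex_asym[OF 1] by (simp add: herm_of_def complex_eq_iff)
  next
    case 2 then show ?thesis using False lex_asym[OF 2] by (simp add: herm_of_def complex_eq_iff)
  qed
qed

lemma mult_cnj_sq: "cnj z * z = complex_of_real ((cmod z)\<^sup>2)"
  by (metis complex_norm_square mult.commute)

lemma herm_sq: "herm_of x p q * herm_of x q p = complex_of_real ((cmod (herm_of x p q))\<^sup>2)"
  by (subst herm_cnj[of x q p]) (metis complex_norm_square)

lemma herm_sq2: "herm_of x q p * herm_of x p q = complex_of_real ((cmod (herm_of x p q))\<^sup>2)"
  by (subst herm_cnj[of x q p]) (rule mult_cnj_sq)

lemma sum_N4_idxs: "(\<Sum>a\<in>idxs N. g a) = (\<Sum>i<N. \<Sum>k<N. g (i, k))"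
  by (simp add: idxs_def sum.cartesian_product atLeast0LessThan)

definition TSr :: "nat \<Rightarrow> (idx \<times> idx \<times> bool \<Rightarrow> real) \<Rightarrow> real" where
  "TSr N x = (\<Sum>i<N. \<Sum>k<N. \<Sum>j<N. \<Sum>l<N. (cmod (herm_of x (i,k) (j,l)))\<^sup>2)"
definition T2r :: "nat \<Rightarrow> (idx \<times> idx \<times> bool \<Rightarrow> real) \<Rightarrow> real" where
  "T2r N x = (\<Sum>i<N. \<Sum>j<N. (cmod (\<Sum>k<N. herm_of x (i,k) (j,k)))\<^sup>2)"
definition T3r :: "nat \<Rightarrow> (idx \<times> idx \<times> bool \<Rightarrow> real) \<Rightarrow> real" where
  "T3r N x = (\<Sum>k<N. \<Sum>l<N. (cmod (\<Sum>i<N. herm_of x (i,k) (i,l)))\<^sup>2)"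

lemma trsq_real: "tr_sq N (herm_of x) = complex_of_real (TSr N x)"
proof -
  have "tr_sq N (herm_of x) = (\<Sum>i<N. \<Sum>k<N. \<Sum>j<N. \<Sum>l<N. herm_of x (i,k) (j,l) * herm_of x (j,l) (i,k))"
    unfolding tr_sq_def sum_N4_idxs ..
  also have "\<dots> = (\<Sum>i<N. \<Sum>k<N. \<Sum>j<N. \<Sum>l<N. complex_of_real ((cmod (herm_of x (i,k) (j,l)))\<^sup>2))"
    by (simp only: herm_sq)
  finally show ?thesis by (simp only: TSr_def of_real_sum)
qed

lemma V4_real: "V4 N lam (herm_of x) = complex_of_real (real N * lam / 2 * (TSr N x + T2r N x + T3r N x))"
proof -
  let ?h = "herm_of x"
  have s1: "(\<Sum>a2<N. \<Sum>a3<N. \<Sum>b2<N. \<Sum>b3<N. ?h (b2, b3) (a2, a3) * ?h (a2, a3) (b2, b3))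
      = complex_of_real (TSr N x)"
  proof -
    have "(\<Sum>a2<N. \<Sum>a3<N. \<Sum>b2<N. \<Sum>b3<N. ?h (b2, b3) (a2, a3) * ?h (a2, a3) (b2, b3))
       = (\<Sum>a2<N. \<Sum>a3<N. \<Sum>b2<N. \<Sum>b3<N. complex_of_real ((cmod (?h (a2,a3) (b2,b3)))\<^sup>2))"
      by (simp only: herm_sq2)
    then show ?thesis by (simp only: TSr_def of_real_sum)
  qed
  have s2: "(\<Sum>a2<N. \<Sum>a3<N. \<Sum>b2<N. \<Sum>b3<N. ?h (b2, a3) (a2, a3) * ?h (a2, b3) (b2, b3))
      = complex_of_real (T2r N x)"
  proof -
    have "(\<Sum>a2<N. \<Sum>a3<N. \<Sum>b2<N. \<Sum>b3<N. ?h (b2, a3) (a2, a3) * ?h (a2, b3) (b2, b3))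
        = (\<Sum>a2<N. \<Sum>b2<N. \<Sum>a3<N. \<Sum>b3<N. ?h (b2, a3) (a2, a3) * ?h (a2, b3) (b2, b3))"
      by (rule sum.cong[OF refl], rule sum.swap)
    also have "\<dots> = (\<Sum>a2<N. \<Sum>b2<N. (\<Sum>a3<N. ?h (b2, a3) (a2, a3)) * (\<Sum>b3<N. ?h (a2, b3) (b2, b3)))"
      by (simp add: sum_product)
    also have "\<dots> = (\<Sum>a2<N. \<Sum>b2<N. cnj (\<Sum>k<N. ?h (a2, k) (b2, k)) * (\<Sum>k<N. ?h (a2, k) (b2, k)))"
      by (subst herm_cnj) simp
    also have "\<dots> = complex_of_real (T2r N x)"
      by (simp only: mult_cnj_sq T2r_def of_real_sum)
    finally show ?thesis .
  qed
  have s3: "(\<Sum>a2<N. \<Sum>a3<N. \<Sum>b2<N. \<Sum>b3<N. ?h (a2, b3) (a2, a3) * ?h (b2, a3) (b2, b3))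
      = complex_of_real (T3r N x)"
  proof -
    have "(\<Sum>a2<N. \<Sum>a3<N. \<Sum>b2<N. \<Sum>b3<N. ?h (a2, b3) (a2, a3) * ?h (b2, a3) (b2, b3))
        = (\<Sum>a3<N. \<Sum>a2<N. \<Sum>b2<N. \<Sum>b3<N. ?h (a2, b3) (a2, a3) * ?h (b2, a3) (b2, b3))"
      by (rule sum.swap)
    also have "\<dots> = (\<Sum>a3<N. \<Sum>a2<N. \<Sum>b3<N. \<Sum>b2<N. ?h (a2, b3) (a2, a3) * ?h (b2, a3) (b2, b3))"
      by (rule sum.cong[OF refl], rule sum.cong[OF refl], rule sum.swap)
    also have "\<dots> = (\<Sum>a3<N. \<Sum>b3<N. \<Sum>a2<N. \<Sum>b2<N. ?h (a2, b3) (a2, a3) * ?h (b2, a3) (b2, b3))"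
      by (rule sum.cong[OF refl], rule sum.swap)
    also have "\<dots> = (\<Sum>a3<N. \<Sum>b3<N. (\<Sum>a2<N. ?h (a2, b3) (a2, a3)) * (\<Sum>b2<N. ?h (b2, a3) (b2, b3)))"
      by (simp add: sum_product)
    also have "\<dots> = (\<Sum>a3<N. \<Sum>b3<N. cnj (\<Sum>i<N. ?h (i, a3) (i, b3)) * (\<Sum>i<N. ?h (i, a3) (i, b3)))"
      by (subst herm_cnj) simp
    also have "\<dots> = complex_of_real (T3r N x)"
      by (simp only: mult_cnj_sq T3r_def of_real_sum)
    finally show ?thesis .
  qed
  show ?thesis unfolding V4_def
    by (simp add: sum.distrib s1 s2 s3)
qed

lemma exponent_real:
  "- (of_nat N / 2) * tr_sq N (herm_of x) + V4 N lam (herm_of x)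
     = complex_of_real (- (real N / 2 * (1 - lam) * TSr N x - real N * lam / 2 * (T2r N x + T3r N x)))"
  unfolding trsq_real V4_real
  apply (simp only: of_real_add of_real_mult of_real_diff of_real_minus of_real_divide of_real_of_nat_eq of_real_numeral of_real_1)
  by (simp add: field_simps)


lemma sum_sym:
  fixes g :: "nat \<Rightarrow> nat \<Rightarrow> real"
  assumes "\<And>i j. g i j = g j i"
  shows "(\<Sum>i<N. \<Sum>j<N. g i j) = (\<Sum>i<N. g i i) + 2 * (\<Sum>j<N. \<Sum>i<j. g i j)"
proof (induction N)
  case 0 then show ?case by simp
next
  case (Suc N)
  have "(\<Sum>i<Suc N. \<Sum>j<Suc N. g i j) = (\<Sum>i<N. \<Sum>j<N. g i j) + (\<Sum>i<N. g i N) + (\<Sum>j<N. g N j) + g N N"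
    by (simp add: sum.distrib)
  also have "(\<Sum>j<N. g N j) = (\<Sum>i<N. g i N)" using assms by simp
  finally show ?case using Suc by (simp add: algebra_simps)
qed

lemma herm_norm: "cmod (herm_of x q p) = cmod (herm_of x p q)"
  by (subst herm_cnj) simp

lemma n_diag: "(cmod (herm_of x p p))\<^sup>2 = (x (p, p, False))\<^sup>2"
  by (simp add: herm_of_def)

lemma n_off: "lex_less p q \<Longrightarrow> (cmod (herm_of x p q))\<^sup>2 = (x (p, q, False))\<^sup>2 + (x (p, q, True))\<^sup>2"
  by (auto simp: herm_of_def cmod_power2 lex_less_def)

lemma lexA: "i < j \<Longrightarrow> lex_less (i, k) (j, l)" by (simp add: lex_less_def)
lemma lexB: "k < l \<Longrightarrow> lex_less (i, k) (i, l)" by (simp add: lex_less_def)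

lemma sum_swap_lt:
  "(\<Sum>i<N. \<Sum>l<N. \<Sum>k<l. g i k l) = (\<Sum>l<N. \<Sum>k<l. \<Sum>i<N. (g i k l :: real))"
proof -
  have "(\<Sum>i<N. \<Sum>l<N. \<Sum>k<l. g i k l) = (\<Sum>l<N. \<Sum>i<N. \<Sum>k<l. g i k l)" by (rule sum.swap)
  also have "\<dots> = (\<Sum>l<N. \<Sum>k<l. \<Sum>i<N. g i k l)" by (rule sum.cong[OF refl], rule sum.swap)
  finally show ?thesis .
qed

definition PA :: "nat \<Rightarrow> (idx \<times> idx \<times> bool \<Rightarrow> real) \<Rightarrow> real" where
  "PA N x = (\<Sum>j<N. \<Sum>i<j. \<Sum>k<N. \<Sum>l<N. (x ((i,k),(j,l),False))\<^sup>2 + (x ((i,k),(j,l),True))\<^sup>2)"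
definition PB :: "nat \<Rightarrow> (idx \<times> idx \<times> bool \<Rightarrow> real) \<Rightarrow> real" where
  "PB N x = (\<Sum>l<N. \<Sum>k<l. \<Sum>i<N. (x ((i,k),(i,l),False))\<^sup>2 + (x ((i,k),(i,l),True))\<^sup>2)"
definition QA :: "nat \<Rightarrow> (idx \<times> idx \<times> bool \<Rightarrow> real) \<Rightarrow> real" where
  "QA N x = (\<Sum>j<N. \<Sum>i<j. (\<Sum>k<N. x ((i,k),(j,k),False))\<^sup>2 + (\<Sum>k<N. x ((i,k),(j,k),True))\<^sup>2)"
definition QB :: "nat \<Rightarrow> (idx \<times> idx \<times> bool \<Rightarrow> real) \<Rightarrow> real" where
  "QB N x = (\<Sum>l<N. \<Sum>k<l. (\<Sum>i<N. x ((i,k),(i,l),False))\<^sup>2 + (\<Sum>i<N. x ((i,k),(i,l),True))\<^sup>2)"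
definition D0 :: "nat \<Rightarrow> (idx \<times> idx \<times> bool \<Rightarrow> real) \<Rightarrow> real" where
  "D0 N x = (\<Sum>i<N. \<Sum>k<N. (x ((i,k),(i,k),False))\<^sup>2)"
definition D2 :: "nat \<Rightarrow> (idx \<times> idx \<times> bool \<Rightarrow> real) \<Rightarrow> real" where
  "D2 N x = (\<Sum>i<N. (\<Sum>k<N. x ((i,k),(i,k),False))\<^sup>2)"
definition D3 :: "nat \<Rightarrow> (idx \<times> idx \<times> bool \<Rightarrow> real) \<Rightarrow> real" where
  "D3 N x = (\<Sum>k<N. (\<Sum>i<N. x ((i,k),(i,k),False))\<^sup>2)"

lemma TSr_eq: "TSr N x = D0 N x + 2 * PA N x + 2 * PB N x"
proof -
  define n2 where "n2 = (\<lambda>p q. (cmod (herm_of x p q))\<^sup>2)"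
  have n2s: "n2 p q = n2 q p" for p q unfolding n2_def by (simp add: herm_norm)
  define G where "G = (\<lambda>i j. \<Sum>k<N. \<Sum>l<N. n2 (i,k) (j,l))"
  have "TSr N x = (\<Sum>i<N. \<Sum>j<N. G i j)"
    unfolding TSr_def G_def n2_def by (rule sum.cong[OF refl], rule sum.swap)
  also have "\<dots> = (\<Sum>i<N. G i i) + 2 * (\<Sum>j<N. \<Sum>i<j. G i j)"
  proof (rule sum_sym)
    fix i j
    have "G j i = (\<Sum>k<N. \<Sum>l<N. n2 (i,l) (j,k))" unfolding G_def using n2s by simp
    also have "\<dots> = G i j" unfolding G_def by (rule sum.swap)
    finally show "G i j = G j i" by simp
  qed
  also have "(\<Sum>i<N. G i i) = D0 N x + 2 * PB N x"
  proof -
    have "G i i = (\<Sum>k<N. (x ((i,k),(i,k),False))\<^sup>2) + 2 * (\<Sum>l<N. \<Sum>k<l. (x ((i,k),(i,l),False))\<^sup>2 + (x ((i,k),(i,l),True))\<^sup>2)" for i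
    proof -
      have "G i i = (\<Sum>k<N. n2 (i,k) (i,k)) + 2 * (\<Sum>l<N. \<Sum>k<l. n2 (i,k) (i,l))"
        unfolding G_def by (rule sum_sym) (simp add: n2s)
      moreover have "n2 (i,k) (i,k) = (x ((i,k),(i,k),False))\<^sup>2" for k unfolding n2_def by (rule n_diag)
      moreover have "k < l \<Longrightarrow> n2 (i,k) (i,l) = (x ((i,k),(i,l),False))\<^sup>2 + (x ((i,k),(i,l),True))\<^sup>2" for k l
        unfolding n2_def by (rule n_off[OF lexB])
      ultimately show ?thesis by simp
    qed
    then have "(\<Sum>i<N. G i i) = D0 N x + 2 * (\<Sum>i<N. \<Sum>l<N. \<Sum>k<l. (x ((i,k),(i,l),False))\<^sup>2 + (x ((i,k),(i,l),True))\<^sup>2)"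
      by (simp add: sum.distrib sum_distrib_left D0_def)
    also have "(\<Sum>i<N. \<Sum>l<N. \<Sum>k<l. (x ((i,k),(i,l),False))\<^sup>2 + (x ((i,k),(i,l),True))\<^sup>2) = PB N x"
      unfolding PB_def by (rule sum_swap_lt)
    finally show ?thesis .
  qed
  also have "(\<Sum>j<N. \<Sum>i<j. G i j) = PA N x"
    unfolding PA_def G_def n2_def using n_off[OF lexA] by simp
  finally show ?thesis by simp
qed

lemma M_cnj: "(\<Sum>k<N. herm_of x (j,k) (i,k)) = cnj (\<Sum>k<N. herm_of x (i,k) (j,k))"
  by (subst herm_cnj) simp

lemma K_cnj: "(\<Sum>i<N. herm_of x (i,l) (i,k)) = cnj (\<Sum>i<N. herm_of x (i,k) (i,l))"
  by (subst herm_cnj) simp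

lemma T2r_eq: "T2r N x = D2 N x + 2 * QA N x"
proof -
  have "T2r N x = (\<Sum>i<N. (cmod (\<Sum>k<N. herm_of x (i,k) (i,k)))\<^sup>2) + 2 * (\<Sum>j<N. \<Sum>i<j. (cmod (\<Sum>k<N. herm_of x (i,k) (j,k)))\<^sup>2)"
    unfolding T2r_def by (rule sum_sym) (metis M_cnj complex_mod_cnj)
  also have "(\<Sum>i<N. (cmod (\<Sum>k<N. herm_of x (i,k) (i,k)))\<^sup>2) = D2 N x"
    unfolding D2_def by (simp add: herm_of_def cmod_power2 Re_sum Im_sum)
  also have "(\<Sum>j<N. \<Sum>i<j. (cmod (\<Sum>k<N. herm_of x (i,k) (j,k)))\<^sup>2) = QA N x"
    unfolding QA_def by (intro sum.cong refl) (auto simp: herm_of_def cmod_power2 Re_sum Im_sum lex_less_def)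
  finally show ?thesis .
qed

lemma T3r_eq: "T3r N x = D3 N x + 2 * QB N x"
proof -
  have "T3r N x = (\<Sum>k<N. (cmod (\<Sum>i<N. herm_of x (i,k) (i,k)))\<^sup>2) + 2 * (\<Sum>l<N. \<Sum>k<l. (cmod (\<Sum>i<N. herm_of x (i,k) (i,l)))\<^sup>2)"
    unfolding T3r_def by (rule sum_sym) (metis K_cnj complex_mod_cnj)
  also have "(\<Sum>k<N. (cmod (\<Sum>i<N. herm_of x (i,k) (i,k)))\<^sup>2) = D3 N x"
    unfolding D3_def by (simp add: herm_of_def cmod_power2 Re_sum Im_sum)
  also have "(\<Sum>l<N. \<Sum>k<l. (cmod (\<Sum>i<N. herm_of x (i,k) (i,l)))\<^sup>2) = QB N x"
    unfolding QB_def by (intro sum.cong refl) (auto simp: herm_of_def cmod_power2 Re_sum Im_sum lex_less_def)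
  finally show ?thesis .
qed


datatype blk = BA nat nat bool | BB nat nat bool | BD

definition hA :: "nat \<Rightarrow> nat \<Rightarrow> bool \<Rightarrow> nat \<times> nat \<Rightarrow> idx \<times> idx \<times> bool" where
  "hA j i f = (\<lambda>(k, l). ((i, k), (j, l), f))"
definition hB :: "nat \<Rightarrow> nat \<Rightarrow> bool \<Rightarrow> nat \<Rightarrow> idx \<times> idx \<times> bool" where
  "hB l k f = (\<lambda>i. ((i, k), (i, l), f))"
definition eD :: "nat \<times> nat \<Rightarrow> idx \<times> idx \<times> bool" where
  "eD = (\<lambda>(i, k). ((i, k), (i, k), False))"
definition uA :: "nat \<times> nat \<Rightarrow> real" where
  "uA = (\<lambda>(k, l). if k = l then 1 else 0)"
definition SQ :: "nat \<Rightarrow> (nat \<times> nat) set" where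
  "SQ N = {..<N} \<times> {..<N}"
definition Pairs :: "nat \<Rightarrow> (nat \<times> nat) set" where
  "Pairs N = (SIGMA j:{..<N}. {..<j})"

definition da :: "nat \<Rightarrow> real \<Rightarrow> real" where "da N lam = real N * (1 - lam) / 2"
definition db :: "nat \<Rightarrow> real \<Rightarrow> real" where "db N lam = real N * lam / 2"

fun Bset :: "nat \<Rightarrow> blk \<Rightarrow> (idx \<times> idx \<times> bool) set" where
  "Bset N (BA j i f) = hA j i f ` SQ N"
| "Bset N (BB l k f) = hB l k f ` {..<N}"
| "Bset N BD = eD ` ({..<N} \<times> {..<N})"

fun Eb :: "nat \<Rightarrow> real \<Rightarrow> blk \<Rightarrow> (idx \<times> idx \<times> bool \<Rightarrow> real) \<Rightarrow> real" where
  "Eb N lam (BA j i f) x = real N * (1 - lam) * (\<Sum>kl\<in>SQ N. (x (hA j i f kl))\<^sup>2)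
      - real N * lam * (\<Sum>kl\<in>SQ N. uA kl * x (hA j i f kl))\<^sup>2 - 2 * (\<Sum>kl\<in>SQ N. (\<lambda>_. 0) kl * x (hA j i f kl))"
| "Eb N lam (BB l k f) x = real N * (1 - lam) * (\<Sum>i\<in>{..<N}. (x (hB l k f i))\<^sup>2)
      - real N * lam * (\<Sum>i\<in>{..<N}. (\<lambda>_. 1) i * x (hB l k f i))\<^sup>2 - 2 * (\<Sum>i\<in>{..<N}. (\<lambda>_. 0) i * x (hB l k f i))"
| "Eb N lam BD x = DF (da N lam) (db N lam) (da N lam * db N lam / (da N lam - 0 * db N lam))
      (((da N lam - real N * db N lam) * db N lam / ((da N lam - real N * db N lam) - 0 * db N lam)
        - da N lam * db N lam / (da N lam - 0 * db N lam)) / real N) {..<N} {..<N} eD x"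

definition BAset :: "nat \<Rightarrow> blk set" where "BAset N = (\<lambda>((j, i), f). BA j i f) ` (Pairs N \<times> UNIV)"
definition BBset :: "nat \<Rightarrow> blk set" where "BBset N = (\<lambda>((l, k), f). BB l k f) ` (Pairs N \<times> UNIV)"
definition Jset :: "nat \<Rightarrow> blk set" where "Jset N = BAset N \<union> BBset N \<union> {BD}"

lemma sumSQ: "(\<Sum>kl\<in>SQ N. h kl) = (\<Sum>k<N. \<Sum>l<N. (h (k, l) :: real))"
  unfolding SQ_def by (rule sum.cartesian_product')

lemma lin2: "(\<Sum>j<N. \<Sum>i<(j::nat). (al * A j i - be * B j i) + (al * C j i - be * D j i))
   = al * (\<Sum>j<N. \<Sum>i<j. A j i + C j i) - be * (\<Sum>j<N. \<Sum>i<j. B j i + (D j i :: real))"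
  by (simp add: sum.distrib sum_subtractf sum_distrib_left algebra_simps)

lemma diag_sum: "(\<Sum>kl\<in>SQ N. uA kl * g kl) = (\<Sum>k<N. (g (k, k) :: real))"
proof -
  have "(\<Sum>kl\<in>SQ N. uA kl * g kl) = (\<Sum>k<N. \<Sum>l<N. (if l = k then g (k, l) else 0))"
    unfolding sumSQ by (intro sum.cong refl) (auto simp: uA_def)
  also have "\<dots> = (\<Sum>k<N. g (k, k))" by simp
  finally show ?thesis .
qed

lemma sum_pairs_bool:
  "(\<Sum>p\<in>Pairs N \<times> UNIV. g p) = (\<Sum>j<N. \<Sum>i<j. g ((j, i), False) + g ((j, i), True))"
proof -
  have "(\<Sum>p\<in>Pairs N \<times> UNIV. g p) = (\<Sum>ji\<in>Pairs N. \<Sum>f\<in>UNIV. g (ji, f))"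
    by (simp add: sum.cartesian_product)
  also have "\<dots> = (\<Sum>ji\<in>Pairs N. g (ji, False) + g (ji, True))"
    by (simp add: UNIV_bool)
  also have "\<dots> = (\<Sum>j<N. \<Sum>i<j. g ((j, i), False) + g ((j, i), True))"
    unfolding Pairs_def by (simp add: sum.Sigma)
  finally show ?thesis .
qed

lemma sumA: "(\<Sum>b\<in>BAset N. Eb N lam b x) = real N * (1 - lam) * PA N x - real N * lam * QA N x"
proof -
  have inj: "inj_on (\<lambda>((j, i), f). BA j i f) (Pairs N \<times> UNIV)" by (auto simp: inj_on_def)
  have e: "Eb N lam (BA j i f) x = real N * (1 - lam) * (\<Sum>k<N. \<Sum>l<N. (x ((i,k),(j,l),f))\<^sup>2)
      - real N * lam * (\<Sum>k<N. x ((i,k),(j,k),f))\<^sup>2" for j i f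
    unfolding Eb.simps diag_sum sumSQ by (simp add: hA_def)
  have "(\<Sum>b\<in>BAset N. Eb N lam b x) = (\<Sum>p\<in>Pairs N \<times> UNIV. Eb N lam ((\<lambda>((j, i), f). BA j i f) p) x)"
    unfolding BAset_def by (rule sum.reindex[OF inj, unfolded comp_def])
  also have "\<dots> = real N * (1 - lam) * PA N x - real N * lam * QA N x"
    unfolding sum_pairs_bool prod.case e lin2 PA_def QA_def by (simp add: sum.distrib)
  finally show ?thesis .
qed

lemma sumB: "(\<Sum>b\<in>BBset N. Eb N lam b x) = real N * (1 - lam) * PB N x - real N * lam * QB N x"
proof -
  have inj: "inj_on (\<lambda>((l, k), f). BB l k f) (Pairs N \<times> UNIV)" by (auto simp: inj_on_def)
  have e: "Eb N lam (BB l k f) x = real N * (1 - lam) * (\<Sum>i<N. (x ((i,k),(i,l),f))\<^sup>2)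
      - real N * lam * (\<Sum>i<N. x ((i,k),(i,l),f))\<^sup>2" for l k f
    by (simp add: hB_def)
  have "(\<Sum>b\<in>BBset N. Eb N lam b x) = (\<Sum>p\<in>Pairs N \<times> UNIV. Eb N lam ((\<lambda>((l, k), f). BB l k f) p) x)"
    unfolding BBset_def by (rule sum.reindex[OF inj, unfolded comp_def])
  also have "\<dots> = real N * (1 - lam) * PB N x - real N * lam * QB N x"
    unfolding sum_pairs_bool prod.case e lin2 PB_def QB_def by (simp add: sum.distrib)
  finally show ?thesis .
qed

lemma sumD:
  assumes "da N lam \<noteq> 0" "da N lam - real N * db N lam \<noteq> 0" "N \<ge> 1"
  shows "Eb N lam BD x = da N lam * D0 N x - db N lam * (D2 N x + D3 N x)"
proof -
  have b1: "da N lam * db N lam / (da N lam - 0 * db N lam) = db N lam" using assms by simp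
  have b2: "(da N lam - real N * db N lam) * db N lam / ((da N lam - real N * db N lam) - 0 * db N lam) = db N lam"
    using assms by simp
  have "Eb N lam BD x = DF (da N lam) (db N lam) (db N lam) 0 {..<N} {..<N} eD x"
    unfolding Eb.simps b1 b2 by simp
  then show ?thesis by (simp add: DF_def eD_def D0_def D2_def D3_def algebra_simps)
qed

lemma E2:
  assumes "lam < 1 / (1 + 2 * real N)" "N \<ge> 1"
  shows "(\<Sum>b\<in>Jset N. Eb N lam b x) = real N / 2 * (1 - lam) * TSr N x - real N * lam / 2 * (T2r N x + T3r N x)"
proof -
  have disj: "BAset N \<inter> BBset N = {}" "(BAset N \<union> BBset N) \<inter> {BD} = {}"
    by (auto simp: BAset_def BBset_def)
  have fin: "finite (BAset N)" "finite (BBset N)"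
    by (auto simp: BAset_def BBset_def Pairs_def)
  have l1: "lam < 1 / 3"
  proof -
    have "1 / (1 + 2 * real N) \<le> 1 / 3" using assms(2) by (intro divide_left_mono) auto
    then show ?thesis using assms(1) by linarith
  qed
  have l2: "(1 + real N) * lam < 1"
  proof (cases "lam \<le> 0")
    case True then have "(1 + real N) * lam \<le> 0" by (intro mult_nonneg_nonpos) auto
    then show ?thesis by simp
  next
    case False
    have "(1 + 2 * real N) * lam < 1" using assms(1) by (simp add: field_simps)
    moreover have "(1 + real N) * lam \<le> (1 + 2 * real N) * lam" using False by (intro mult_right_mono) auto
    ultimately show ?thesis by simp
  qed
  have e2: "da N lam - real N * db N lam = real N / 2 * (1 - (1 + real N) * lam)"
    by (simp add: da_def db_def field_simps)
  have nz: "da N lam \<noteq> 0" "da N lam - real N * db N lam \<noteq> 0"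
    using assms(2) l1 l2 unfolding e2 by (auto simp: da_def)
  have "(\<Sum>b\<in>Jset N. Eb N lam b x) = (\<Sum>b\<in>BAset N. Eb N lam b x) + (\<Sum>b\<in>BBset N. Eb N lam b x) + Eb N lam BD x"
    unfolding Jset_def using disj fin by (simp add: sum.union_disjoint)
  also have "\<dots> = real N / 2 * (1 - lam) * TSr N x - real N * lam / 2 * (T2r N x + T3r N x)"
    unfolding sumA sumB sumD[OF nz assms(2)] TSr_eq T2r_eq T3r_eq
    by (simp add: da_def db_def field_simps)
  finally show ?thesis .
qed


lemma coords_union: "coords N = (\<Union>b\<in>Jset N. Bset N b)"
proof
  show "coords N \<subseteq> (\<Union>b\<in>Jset N. Bset N b)"
  proof
    fix c assume "c \<in> coords N"
    then obtain p q f where c: "c = (p, q, f)" and pq: "p \<in> idxs N" "q \<in> idxs N"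
      and o: "(p = q \<and> f = False) \<or> lex_less p q" unfolding coords_def by blast
    obtain i k j l where p: "p = (i, k)" and q: "q = (j, l)" by (cases p, cases q)
    have ik: "i < N" "k < N" "j < N" "l < N" using pq by (auto simp: p q idxs_def)
    consider "p = q \<and> f = False" | "i < j" | "i = j \<and> k < l" using o by (auto simp: p q lex_less_def)
    then show "c \<in> (\<Union>b\<in>Jset N. Bset N b)"
    proof cases
      case 1
      then have "c \<in> Bset N BD" using ik by (auto simp: c p q eD_def)
      then show ?thesis by (auto simp: Jset_def)
    next
      case 2
      have "BA j i f \<in> Jset N" unfolding Jset_def BAset_def Pairs_def
        by (intro UnI1, rule image_eqI[where x="((j,i),f)"]) (use ik 2 in auto)
      moreover have "c \<in> Bset N (BA j i f)" using ik by (auto simp: c p q hA_def SQ_def image_iff)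
      ultimately show ?thesis by blast
    next
      case 3
      have "BB l k f \<in> Jset N" unfolding Jset_def BBset_def Pairs_def
        by (intro UnI1 UnI2, rule image_eqI[where x="((l,k),f)"]) (use ik 3 in auto)
      moreover have "c \<in> Bset N (BB l k f)" using ik 3 by (auto simp: c p q hB_def image_iff)
      ultimately show ?thesis by blast
    qed
  qed
next
  show "(\<Union>b\<in>Jset N. Bset N b) \<subseteq> coords N"
    by (auto simp: Jset_def BAset_def BBset_def Pairs_def coords_def hA_def hB_def eD_def SQ_def idxs_def lex_less_def)
qed

lemma Jset_finite: "finite (Jset N)"
  by (auto simp: Jset_def BAset_def BBset_def Pairs_def)

lemma Bset_finite: "finite (Bset N b)"
  by (cases b) (auto simp: SQ_def)

lemma Bset_disj: "disjoint_family_on (Bset N) (Jset N)"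
  unfolding disjoint_family_on_def
proof (intro ballI impI)
  fix b b' assume "b \<in> Jset N" "b' \<in> Jset N" "b \<noteq> b'"
  then show "Bset N b \<inter> Bset N b' = {}"
    by (cases b; cases b') (auto simp: hA_def hB_def eD_def Jset_def BAset_def BBset_def Pairs_def)
qed

lemma Eb_meas: "(\<lambda>x. ennreal (exp (- Eb N lam b x))) \<in> borel_measurable (PiM (Bset N b) (\<lambda>_. lborel))"
proof (cases b)
  case (BA j i f) show ?thesis unfolding BA Eb.simps Bset.simps by (rule GL_meas[where w="\<lambda>_. 0"])
next
  case (BB l k f) show ?thesis unfolding BB Eb.simps Bset.simps by (rule GL_meas[where w="\<lambda>_. 0" and u="\<lambda>_. 1"])
next
  case BD show ?thesis unfolding BD Eb.simps Bset.simps by (rule DF_meas)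
qed

lemma Eb_meas_real: "(\<lambda>x. exp (- Eb N lam b x)) \<in> borel_measurable (PiM (Bset N b) (\<lambda>_. lborel))"
proof -
  have "(\<lambda>x. enn2real (ennreal (exp (- Eb N lam b x)))) \<in> borel_measurable (PiM (Bset N b) (\<lambda>_. lborel))"
    using Eb_meas by measurable
  then show ?thesis by simp
qed

lemma DF_local:
  assumes "\<And>i k. i \<in> R \<Longrightarrow> k \<in> K \<Longrightarrow> x (e (i, k)) = y (e (i, k))"
  shows "DF a b \<beta> \<gamma> R K e x = DF a b \<beta> \<gamma> R K e y"
proof -
  have r: "\<And>i. i \<in> R \<Longrightarrow> (\<Sum>k\<in>K. x (e (i,k))) = (\<Sum>k\<in>K. y (e (i,k)))"
    by (rule sum.cong) (auto simp: assms)
  have r2: "\<And>i. i \<in> R \<Longrightarrow> (\<Sum>k\<in>K. (x (e (i,k)))\<^sup>2) = (\<Sum>k\<in>K. (y (e (i,k)))\<^sup>2)"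
    by (rule sum.cong) (auto simp: assms)
  have c: "\<And>k. k \<in> K \<Longrightarrow> (\<Sum>i\<in>R. x (e (i,k))) = (\<Sum>i\<in>R. y (e (i,k)))"
    by (rule sum.cong) (auto simp: assms)
  have A: "(\<Sum>i\<in>R. \<Sum>k\<in>K. (x (e (i,k)))\<^sup>2) = (\<Sum>i\<in>R. \<Sum>k\<in>K. (y (e (i,k)))\<^sup>2)"
    by (rule sum.cong) (auto simp: r2)
  have B: "(\<Sum>i\<in>R. (\<Sum>k\<in>K. x (e (i,k)))\<^sup>2) = (\<Sum>i\<in>R. (\<Sum>k\<in>K. y (e (i,k)))\<^sup>2)"
    by (rule sum.cong) (auto simp: r)
  have C: "(\<Sum>k\<in>K. (\<Sum>i\<in>R. x (e (i,k)))\<^sup>2) = (\<Sum>k\<in>K. (\<Sum>i\<in>R. y (e (i,k)))\<^sup>2)"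
    by (rule sum.cong) (auto simp: c)
  have D: "(\<Sum>i\<in>R. \<Sum>k\<in>K. x (e (i,k))) = (\<Sum>i\<in>R. \<Sum>k\<in>K. y (e (i,k)))"
    by (rule sum.cong) (auto simp: r)
  show ?thesis unfolding DF_def A B C D ..
qed

lemma Eb_local:
  assumes "\<And>c. c \<in> Bset N b \<Longrightarrow> x c = y c"
  shows "Eb N lam b x = Eb N lam b y"
proof (cases b)
  case (BA j i f)
  then have h: "kl \<in> SQ N \<Longrightarrow> x (hA j i f kl) = y (hA j i f kl)" for kl using assms by auto
  show ?thesis unfolding BA Eb.simps using h by (simp cong: sum.cong)
next
  case (BB l k f)
  then have h: "i \<in> {..<N} \<Longrightarrow> x (hB l k f i) = y (hB l k f i)" for i using assms by auto
  have s1: "(\<Sum>i<N. (x (hB l k f i))\<^sup>2) = (\<Sum>i<N. (y (hB l k f i))\<^sup>2)" by (rule sum.cong) (simp_all add: h)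
  have s2: "(\<Sum>i<N. x (hB l k f i)) = (\<Sum>i<N. y (hB l k f i))" by (rule sum.cong) (simp_all add: h)
  show ?thesis unfolding BB Eb.simps using s1 s2 by simp
next
  case BD
  then have h: "i < N \<Longrightarrow> k < N \<Longrightarrow> x (eD (i, k)) = y (eD (i, k))" for i k using assms by auto
  show ?thesis unfolding BD Eb.simps by (rule DF_local) (auto simp: h)
qed


definition okN :: "nat \<Rightarrow> real \<Rightarrow> bool" where
  "okN N lam \<longleftrightarrow> N \<ge> 1 \<and> lam < 1 / (1 + 2 * real N)"

lemma okN_facts:
  assumes "okN N lam"
  shows "1 - lam > 0" "1 - (1 + real N) * lam > 0" "1 - (1 + 2 * real N) * lam > 0" "N \<ge> 1"
proof -
  have N: "N \<ge> 1" and l: "lam < 1 / (1 + 2 * real N)" using assms by (auto simp: okN_def)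
  show "N \<ge> 1" by (rule N)
  show l3: "1 - (1 + 2 * real N) * lam > 0" using l by (simp add: field_simps)
  show l2: "1 - (1 + real N) * lam > 0"
  proof (cases "lam \<le> 0")
    case True then have "(1 + real N) * lam \<le> 0" by (intro mult_nonneg_nonpos) auto
    then show ?thesis by simp
  next
    case False
    then have "(1 + real N) * lam \<le> (1 + 2 * real N) * lam" by (intro mult_right_mono) auto
    then show ?thesis using l3 by simp
  qed
  show "1 - lam > 0"
  proof (cases "lam \<le> 0")
    case True then show ?thesis by simp
  next
    case False
    then have "lam \<le> (1 + real N) * lam" by (simp add: algebra_simps)
    then show ?thesis using l2 by simp
  qed
qed

fun bval :: "nat \<Rightarrow> real \<Rightarrow> blk \<Rightarrow> real" where
  "bval N lam (BA j i f) = sqrt (pi / (real N * (1 - lam))) ^ (N * N)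
      * sqrt (real N * (1 - lam) / (real N * (1 - lam) - real N * lam * real N))"
| "bval N lam (BB l k f) = sqrt (pi / (real N * (1 - lam))) ^ N
      * sqrt (real N * (1 - lam) / (real N * (1 - lam) - real N * lam * real N))"
| "bval N lam BD = DV (da N lam) (db N lam) N 0 N"

lemma sum_uA2: "(\<Sum>kl\<in>SQ N. (uA kl)\<^sup>2) = real N"
proof -
  have "(uA kl)\<^sup>2 = uA kl * (\<lambda>_. 1) kl" for kl by (auto simp: uA_def split: prod.split)
  then have "(\<Sum>kl\<in>SQ N. (uA kl)\<^sup>2) = (\<Sum>kl\<in>SQ N. uA kl * (\<lambda>_. 1) kl)" by simp
  also have "\<dots> = real N" unfolding diag_sum by simp
  finally show ?thesis .
qed

lemma da_facts:
  assumes "okN N lam"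
  shows "da N lam > 0" "da N lam - real N * db N lam > 0" "(da N lam - real N * db N lam) - (0 + real N) * db N lam > 0"
proof -
  note f = okN_facts[OF assms]
  have N: "real N > 0" using f(4) by simp
  have e1: "da N lam = real N / 2 * (1 - lam)" by (simp add: da_def)
  have p1: "real N / 2 * (1 - lam) > 0" using f N by simp
  show "da N lam > 0" using e1 p1 by linarith
  have e2: "da N lam - real N * db N lam = real N / 2 * (1 - (1 + real N) * lam)" by (simp add: da_def db_def field_simps)
  have p2: "real N / 2 * (1 - (1 + real N) * lam) > 0" using f N by simp
  show "da N lam - real N * db N lam > 0" using e2 p2 by linarith
  have "(da N lam - real N * db N lam) - (0 + real N) * db N lam = real N / 2 * (1 - (1 + 2 * real N) * lam)"
    by (simp add: da_def db_def field_simps)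
  moreover have "real N / 2 * (1 - (1 + 2 * real N) * lam) > 0" using f N by simp
  ultimately show "(da N lam - real N * db N lam) - (0 + real N) * db N lam > 0" by linarith
qed

lemma block_int:
  assumes "okN N lam"
  shows "(\<integral>\<^sup>+x. ennreal (exp (- Eb N lam b x)) \<partial>PiM (Bset N b) (\<lambda>_. lborel)) = ennreal (bval N lam b)"
proof -
  note f = okN_facts[OF assms]
  have N: "real N > 0" using f(4) by simp
  have al: "real N * (1 - lam) > 0" using f N by simp
  have al2: "real N * (1 - lam) - real N * lam * real N > 0"
  proof -
    have "real N * (1 - lam) - real N * lam * real N = real N * (1 - (1 + real N) * lam)" by (simp add: algebra_simps)
    then show ?thesis using f N by simp
  qed
  show ?thesis
  proof (cases b)
    case (BA j i f)
    have inj: "inj_on (hA j i f) (SQ N)" by (auto simp: inj_on_def hA_def)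
    have fin: "finite (SQ N)" by (simp add: SQ_def)
    have cd: "card (SQ N) = N * N" by (simp add: SQ_def card_cartesian_product)
    show ?thesis unfolding BA Eb.simps Bset.simps
      using GL[OF fin inj al, of "real N * lam" uA "\<lambda>_. 0"] al2 unfolding sum_uA2 cd
      by simp
  next
    case (BB l k f)
    have inj: "inj_on (hB l k f) {..<N}" by (auto simp: inj_on_def hB_def)
    show ?thesis unfolding BB Eb.simps Bset.simps
      using GL[OF _ inj al, of "real N * lam" "\<lambda>_. 1" "\<lambda>_. 0"] al2
      by simp
  next
    case BD
    have inj: "inj_on eD ({..<N} \<times> {..<N})" by (auto simp: inj_on_def eD_def)
    note d = da_facts[OF assms]
    show ?thesis unfolding BD Eb.simps Bset.simps bval.simps
      using DL[of "{..<N}" "{..<N}" N eD "da N lam" "db N lam" 0] inj d f(4) by simp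
  qed
qed


lemma meas_restrict_real:
  fixes g :: "('c \<Rightarrow> real) \<Rightarrow> real"
  assumes "B \<subseteq> A" "g \<in> borel_measurable (PiM B (\<lambda>_. lborel))"
    "\<And>x y. (\<And>c. c \<in> B \<Longrightarrow> x c = y c) \<Longrightarrow> g x = g y"
  shows "g \<in> borel_measurable (PiM A (\<lambda>_. lborel))"
proof -
  have eq: "g = (\<lambda>x. g (restrict x B))"
    by (rule ext, rule assms(3)) simp
  have "(\<lambda>x. g (restrict x B)) \<in> borel_measurable (PiM A (\<lambda>_. lborel))"
    using measurable_comp[OF measurable_restrict_subset[OF assms(1)] assms(2)] by (simp add: comp_def)
  then show ?thesis using eq by simp
qed

lemma al_facts:
  assumes "okN N lam"
  shows "real N * (1 - lam) > 0" "real N * (1 - lam) - real N * lam * real N > 0"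
proof -
  note f = okN_facts[OF assms]
  have N: "real N > 0" using f(4) by simp
  show "real N * (1 - lam) > 0" using f N by simp
  have "real N * (1 - lam) - real N * lam * real N = real N * (1 - (1 + real N) * lam)" by (simp add: algebra_simps)
  then show "real N * (1 - lam) - real N * lam * real N > 0" using f N by simp
qed

lemma bval_nonneg:
  assumes "okN N lam"
  shows "bval N lam b \<ge> 0"
proof (cases b)
  case BD
  note d = da_facts[OF assms]
  show ?thesis unfolding BD bval.simps
    by (rule DV_nonneg) (use d in simp_all)
qed (use al_facts[OF assms] in simp_all)

lemma Z_eq:
  assumes "okN N lam"
  shows "Z_HT N lam = complex_of_real (\<Prod>b\<in>Jset N. bval N lam b)"
proof -
  note f = okN_facts[OF assms]
  have lam: "lam < 1 / (1 + 2 * real N)" using assms by (simp add: okN_def)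
  let ?M = "PiM (coords N) (\<lambda>_. lborel)"
  define F where "F = (\<lambda>x. \<Prod>b\<in>Jset N. exp (- Eb N lam b x))"
  have integrand: "exp (- (of_nat N / 2) * tr_sq N (herm_of x) + V4 N lam (herm_of x)) = complex_of_real (F x)" for x
  proof -
    have "- (of_nat N / 2) * tr_sq N (herm_of x) + V4 N lam (herm_of x) = complex_of_real (- (\<Sum>b\<in>Jset N. Eb N lam b x))"
      unfolding exponent_real E2[OF lam f(4)] ..
    then show ?thesis
      unfolding F_def by (simp add: exp_of_real exp_sum[OF Jset_finite] sum_negf[symmetric] exp_minus)
  qed
  have Fmeas: "F \<in> borel_measurable ?M"
    unfolding F_def
  proof (rule borel_measurable_prod)
    fix b assume b: "b \<in> Jset N"
    show "(\<lambda>x. exp (- Eb N lam b x)) \<in> borel_measurable ?M"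
    proof (rule meas_restrict_real[OF _ Eb_meas_real])
      show "Bset N b \<subseteq> coords N" using b coords_union by auto
      show "\<And>x y. (\<And>c. c \<in> Bset N b \<Longrightarrow> x c = y c) \<Longrightarrow> exp (- Eb N lam b x) = exp (- Eb N lam b y)"
        using Eb_local by metis
    qed
  qed
  have "Z_HT N lam = integral\<^sup>L ?M (\<lambda>x. complex_of_real (F x))"
    unfolding Z_HT_def integrand ..
  also have "\<dots> = complex_of_real (integral\<^sup>L ?M F)" by simp
  also have "integral\<^sup>L ?M F = enn2real (\<integral>\<^sup>+x. ennreal (F x) \<partial>?M)"
    by (rule integral_eq_nn_integral[OF Fmeas]) (simp add: F_def prod_nonneg)
  also have "(\<integral>\<^sup>+x. ennreal (F x) \<partial>?M) = (\<integral>\<^sup>+x. (\<Prod>b\<in>Jset N. ennreal (exp (- Eb N lam b x))) \<partial>?M)"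
    unfolding F_def by (simp add: prod_ennreal)
  also have "\<dots> = (\<Prod>b\<in>Jset N. \<integral>\<^sup>+x. ennreal (exp (- Eb N lam b x)) \<partial>PiM (Bset N b) (\<lambda>_. lborel))"
    unfolding coords_union
  proof (rule BP[OF Jset_finite Bset_finite Bset_disj])
    show "\<And>j. j \<in> Jset N \<Longrightarrow> (\<lambda>x. ennreal (exp (- Eb N lam j x))) \<in> borel_measurable (PiM (Bset N j) (\<lambda>_. lborel))"
      by (rule Eb_meas)
    show "\<And>j x y. j \<in> Jset N \<Longrightarrow> (\<And>c. c \<in> Bset N j \<Longrightarrow> x c = y c) \<Longrightarrow> ennreal (exp (- Eb N lam j x)) = ennreal (exp (- Eb N lam j y))"
      using Eb_local by metis
  qed
  also have "\<dots> = (\<Prod>b\<in>Jset N. ennreal (bval N lam b))"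
    using block_int[OF assms] by simp
  also have "\<dots> = ennreal (\<Prod>b\<in>Jset N. bval N lam b)"
    using bval_nonneg[OF assms] by (simp add: prod_ennreal)
  finally show ?thesis using bval_nonneg[OF assms] by (simp add: prod_nonneg)
qed


lemma sq_ratio:
  fixes A B C :: real
  assumes "A > 0" "B \<ge> 0" "C > 0"
  shows "((sqrt A ^ k * sqrt B) / (sqrt C ^ k))\<^sup>2 = (A / C) ^ k * B"
proof -
  have "(sqrt A ^ k * sqrt B) / (sqrt C ^ k) = sqrt ((A / C) ^ k * B)"
    using assms by (simp add: real_sqrt_power[symmetric] real_sqrt_mult real_sqrt_divide power_divide)
  then show ?thesis using assms by simp
qed

lemma inv_step:
  fixes L M :: real
  assumes "L \<noteq> 0" "M \<noteq> 0"
  shows "inverse L ^ (k + 1) * (L / M) = inverse (L ^ k * M)"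
  using assms by (simp add: power_inverse field_simps)

lemma rA_sq:
  assumes "okN N lam" "N = Suc m"
  shows "(bval N lam (BA j i f) / bval N 0 (BA j i f))\<^sup>2 = inverse ((1 - lam) ^ (m * (m + 2)) * (1 - (1 + real N) * lam))"
proof -
  note f = okN_facts[OF assms(1)]
  note a = al_facts[OF assms(1)]
  define c where "c = real N"
  have c: "c > 0" using f(4) by (simp add: c_def)
  have e: "real N * (1 - lam) / (real N * (1 - lam) - real N * lam * real N) = (1 - lam) / (1 - (1 + real N) * lam)"
  proof -
    have "real N * (1 - lam) - real N * lam * real N = real N * (1 - (1 + real N) * lam)" by (simp add: algebra_simps)
    then show ?thesis using c unfolding c_def by simp
  qed
  have "(bval N lam (BA j i f) / bval N 0 (BA j i f))\<^sup>2
      = ((sqrt (pi / (c * (1 - lam))) ^ (N * N) * sqrt ((1 - lam) / (1 - (1 + real N) * lam))) / sqrt (pi / c) ^ (N * N))\<^sup>2"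
    using c by (simp add: e c_def)
  also have "\<dots> = ((pi / (c * (1 - lam))) / (pi / c)) ^ (N * N) * ((1 - lam) / (1 - (1 + real N) * lam))"
    by (rule sq_ratio) (use c f in simp_all)
  also have "(pi / (c * (1 - lam))) / (pi / c) = inverse (1 - lam)" using c f by (simp add: field_simps)
  also have "N * N = m * (m + 2) + 1" using assms(2) by (simp add: algebra_simps)
  also have "inverse (1 - lam) ^ (m * (m + 2) + 1) * ((1 - lam) / (1 - (1 + real N) * lam))
      = inverse ((1 - lam) ^ (m * (m + 2)) * (1 - (1 + real N) * lam))"
    by (rule inv_step) (use f in auto)
  finally show ?thesis .
qed

lemma rB_sq:
  assumes "okN N lam" "N = Suc m"
  shows "(bval N lam (BB l k f) / bval N 0 (BB l k f))\<^sup>2 = inverse ((1 - lam) ^ m * (1 - (1 + real N) * lam))"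
proof -
  note f = okN_facts[OF assms(1)]
  define c where "c = real N"
  have c: "c > 0" using f(4) by (simp add: c_def)
  have e: "real N * (1 - lam) / (real N * (1 - lam) - real N * lam * real N) = (1 - lam) / (1 - (1 + real N) * lam)"
  proof -
    have "real N * (1 - lam) - real N * lam * real N = real N * (1 - (1 + real N) * lam)" by (simp add: algebra_simps)
    then show ?thesis using c unfolding c_def by simp
  qed
  have "(bval N lam (BB l k f) / bval N 0 (BB l k f))\<^sup>2
      = ((sqrt (pi / (c * (1 - lam))) ^ N * sqrt ((1 - lam) / (1 - (1 + real N) * lam))) / sqrt (pi / c) ^ N)\<^sup>2"
    using c by (simp add: e c_def)
  also have "\<dots> = ((pi / (c * (1 - lam))) / (pi / c)) ^ N * ((1 - lam) / (1 - (1 + real N) * lam))"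
    by (rule sq_ratio) (use c f in simp_all)
  also have "(pi / (c * (1 - lam))) / (pi / c) = inverse (1 - lam)" using c f by (simp add: field_simps)
  also have "inverse (1 - lam) ^ N * ((1 - lam) / (1 - (1 + real N) * lam))
      = inverse ((1 - lam) ^ m * (1 - (1 + real N) * lam))"
    unfolding assms(2) Suc_eq_plus1 by (rule inv_step) (use f assms(2) in auto)
  finally show ?thesis .
qed


lemma pw1:
  fixes h L1 L2 :: real
  assumes "h \<noteq> 0" "L1 \<noteq> 0"
  shows "(h * L1) ^ Suc m * (h * L2) / (h * L1) = h ^ (m + 1) * (L1 ^ m * L2)"
  using assms by (simp add: power_mult_distrib field_simps)

lemma DVf:
  fixes h L1 L2 L3 a b :: real
  assumes h: "h > 0" and L: "L1 > 0" "L2 > 0" "L3 > 0"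
    and e: "a = h * L1" "a - real (Suc m) * b = h * L2" "(a - real (Suc m) * b) - real (Suc m) * b = h * L3"
  shows "DV a b (Suc m) 0 (Suc m) = sqrt (pi ^ (Suc m * Suc m) / (((h ^ (m + 1)) ^ m * h ^ (m + 1)) * ((L1 ^ m * L2) ^ m * (L2 ^ m * L3))))"
proof -
  have e1: "a - (0 + real (Suc m)) * b = h * L2" using e by simp
  have e2: "a - 0 * b = h * L1" using e by simp
  have e3: "(a - real (Suc m) * b) - (0 + real (Suc m)) * b = h * L3" using e by simp
  have e4: "(a - real (Suc m) * b) - 0 * b = h * L2" using e by simp
  have "DV a b (Suc m) 0 (Suc m) = sqrt (pi ^ (Suc m * Suc m) / (((h * L1) ^ Suc m * (h * L2) / (h * L1)) ^ m
       * ((h * L2) ^ Suc m * (h * L3) / (h * L2))))"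
    unfolding DV_def e1 e2 e3 e4 unfolding e(2) unfolding e(1) by simp
  also have "((h * L1) ^ Suc m * (h * L2) / (h * L1)) = h ^ (m + 1) * (L1 ^ m * L2)"
    by (rule pw1) (use h L in auto)
  also have "((h * L2) ^ Suc m * (h * L3) / (h * L2)) = h ^ (m + 1) * (L2 ^ m * L3)"
    by (rule pw1) (use h L in auto)
  also have "(h ^ (m + 1) * (L1 ^ m * L2)) ^ m * (h ^ (m + 1) * (L2 ^ m * L3))
      = ((h ^ (m + 1)) ^ m * h ^ (m + 1)) * ((L1 ^ m * L2) ^ m * (L2 ^ m * L3))"
    by (simp add: power_mult_distrib mult_ac)
  finally show ?thesis .
qed

lemma rD_sq:
  assumes "okN N lam" "N = Suc m"
  shows "(bval N lam BD / bval N 0 BD)\<^sup>2 = inverse ((1 - lam) ^ (m * m) * (1 - (1 + real N) * lam) ^ (2 * m) * (1 - (1 + 2 * real N) * lam))"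
proof -
  note f = okN_facts[OF assms(1)]
  define h where "h = real N / 2"
  have h: "h > 0" using f(4) by (simp add: h_def)
  define L1 where "L1 = 1 - lam"
  define L2 where "L2 = 1 - (1 + real N) * lam"
  define L3 where "L3 = 1 - (1 + 2 * real N) * lam"
  have L: "L1 > 0" "L2 > 0" "L3 > 0" using f by (simp_all add: L1_def L2_def L3_def)
  have d1: "DV (da N lam) (db N lam) N 0 N = sqrt (pi ^ (Suc m * Suc m) / (((h ^ (m + 1)) ^ m * h ^ (m + 1)) * ((L1 ^ m * L2) ^ m * (L2 ^ m * L3))))"
    unfolding assms(2)
    by (rule DVf[OF h L]) (simp_all add: da_def db_def h_def L1_def L2_def L3_def assms(2) field_simps)
  have d0: "DV (da N 0) (db N 0) N 0 N = sqrt (pi ^ (Suc m * Suc m) / (((h ^ (m + 1)) ^ m * h ^ (m + 1)) * ((1 ^ m * 1) ^ m * (1 ^ m * 1))))"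
    unfolding assms(2)
    by (rule DVf[OF h]) (simp_all add: da_def db_def h_def assms(2) field_simps)
  define P where "P = pi ^ (Suc m * Suc m)"
  define H where "H = (h ^ (m + 1)) ^ m * h ^ (m + 1)"
  define Q where "Q = (L1 ^ m * L2) ^ m * (L2 ^ m * L3)"
  have P: "P > 0" and H: "H > 0" and Q: "Q > 0" using h L by (simp_all add: P_def H_def Q_def)
  have "(bval N lam BD / bval N 0 BD)\<^sup>2 = (sqrt (P / (H * Q)) / sqrt (P / H))\<^sup>2"
    unfolding bval.simps d1 d0 P_def[symmetric] H_def[symmetric] Q_def[symmetric] by simp
  also have "\<dots> = inverse Q"
    using P H Q by (simp add: power_divide real_sqrt_pow2 field_simps)
  also have "Q = (1 - lam) ^ (m * m) * (1 - (1 + real N) * lam) ^ (2 * m) * (1 - (1 + 2 * real N) * lam)"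
  proof -
    have "L2 ^ (2 * m) = L2 ^ m * L2 ^ m" by (simp add: mult_2 power_add)
    then show ?thesis
      unfolding Q_def L1_def[symmetric] L2_def[symmetric] L3_def[symmetric]
      by (simp add: power_mult_distrib power_mult[symmetric] mult_ac)
  qed
  finally show ?thesis .
qed


lemma gauss2: "2 * (\<Sum>j<N. j) = N * (N - 1 :: nat)"
  by (induction N) (auto simp: algebra_simps)

lemma card_BAset: "card (BAset N) = N * (N - 1)"
proof -
  have inj: "inj_on (\<lambda>((j, i), f). BA j i f) (Pairs N \<times> UNIV)" by (auto simp: inj_on_def)
  have "card (BAset N) = card (Pairs N \<times> (UNIV :: bool set))"
    unfolding BAset_def by (rule card_image[OF inj])
  also have "\<dots> = card (Pairs N) * 2" by (simp add: card_cartesian_product)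
  also have "card (Pairs N) = (\<Sum>j<N. j)" by (simp add: Pairs_def)
  finally show ?thesis using gauss2[of N] by simp
qed

lemma card_BBset: "card (BBset N) = N * (N - 1)"
proof -
  have inj: "inj_on (\<lambda>((l, k), f). BB l k f) (Pairs N \<times> UNIV)" by (auto simp: inj_on_def)
  have "card (BBset N) = card (Pairs N \<times> (UNIV :: bool set))"
    unfolding BBset_def by (rule card_image[OF inj])
  also have "\<dots> = card (Pairs N) * 2" by (simp add: card_cartesian_product)
  also have "card (Pairs N) = (\<Sum>j<N. j)" by (simp add: Pairs_def)
  finally show ?thesis using gauss2[of N] by simp
qed

lemma prod_split:
  fixes g :: "blk \<Rightarrow> real"
  shows "(\<Prod>b\<in>Jset N. g b) = (\<Prod>b\<in>BAset N. g b) * (\<Prod>b\<in>BBset N. g b) * g BD"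
proof -
  have disj: "BAset N \<inter> BBset N = {}" "(BAset N \<union> BBset N) \<inter> {BD} = {}"
    by (auto simp: BAset_def BBset_def)
  have fin: "finite (BAset N)" "finite (BBset N)"
    by (auto simp: BAset_def BBset_def Pairs_def)
  show ?thesis unfolding Jset_def using disj fin by (simp add: prod.union_disjoint)
qed

lemma invpow: "inverse (X::real) ^ M * inverse Y ^ M * inverse Z = inverse (X ^ M * Y ^ M * Z)"
  by (simp add: power_inverse inverse_mult_distrib)

lemma ratio_real:
  assumes "okN N lam" "N = Suc m"
  shows "(\<Prod>b\<in>Jset N. bval N lam b / bval N 0 b)
      = (1 - lam) powr (- (1/2) * (real N ^ 2 - 1) ^ 2) * (1 - (1 + real N) * lam) powr (- (real N ^ 2 - 1))
        * (1 - (1 + 2 * real N) * lam) powr (- 1/2)"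
proof -
  note f = okN_facts[OF assms(1)]
  have ok0: "okN N 0" using f(4) by (simp add: okN_def)
  define L1 where "L1 = 1 - lam"
  define L2 where "L2 = 1 - (1 + real N) * lam"
  define L3 where "L3 = 1 - (1 + 2 * real N) * lam"
  have L: "L1 > 0" "L2 > 0" "L3 > 0" using f by (simp_all add: L1_def L2_def L3_def)
  define M where "M = N * (N - 1)"
  define rA where "rA = bval N lam (BA 0 0 False) / bval N 0 (BA 0 0 False)"
  define rB where "rB = bval N lam (BB 0 0 False) / bval N 0 (BB 0 0 False)"
  define rD where "rD = bval N lam BD / bval N 0 BD"
  have pA: "(\<Prod>b\<in>BAset N. bval N lam b / bval N 0 b) = rA ^ M"
  proof -
    have "(\<Prod>b\<in>BAset N. bval N lam b / bval N 0 b) = (\<Prod>b\<in>BAset N. rA)"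
      by (rule prod.cong) (auto simp: BAset_def rA_def)
    then show ?thesis by (simp add: card_BAset M_def)
  qed
  have pB: "(\<Prod>b\<in>BBset N. bval N lam b / bval N 0 b) = rB ^ M"
  proof -
    have "(\<Prod>b\<in>BBset N. bval N lam b / bval N 0 b) = (\<Prod>b\<in>BBset N. rB)"
      by (rule prod.cong) (auto simp: BBset_def rB_def)
    then show ?thesis by (simp add: card_BBset M_def)
  qed
  have R: "(\<Prod>b\<in>Jset N. bval N lam b / bval N 0 b) = rA ^ M * rB ^ M * rD"
    unfolding prod_split pA pB rD_def ..
  have nn: "rA \<ge> 0" "rB \<ge> 0" "rD \<ge> 0" unfolding rA_def rB_def rD_def
    by (rule divide_nonneg_nonneg, rule bval_nonneg[OF assms(1)], rule bval_nonneg[OF ok0])+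
  have sA: "rA\<^sup>2 = inverse (L1 ^ (m * (m + 2)) * L2)" unfolding rA_def L1_def L2_def by (rule rA_sq[OF assms])
  have sB: "rB\<^sup>2 = inverse (L1 ^ m * L2)" unfolding rB_def L1_def L2_def by (rule rB_sq[OF assms])
  have sD: "rD\<^sup>2 = inverse (L1 ^ (m * m) * L2 ^ (2 * m) * L3)" unfolding rD_def L1_def L2_def L3_def by (rule rD_sq[OF assms])
  define E1 where "E1 = (m * (m + 2))\<^sup>2"
  define E2 where "E2 = 2 * (m * (m + 2))"
  have Mm: "M = (m + 1) * m" using assms(2) by (simp add: M_def)
  have e1: "m * (m + 2) * M + m * M + m * m = E1" unfolding E1_def Mm by (simp add: power2_eq_square algebra_simps)
  have e2: "M + M + 2 * m = E2" unfolding E2_def Mm by (simp add: algebra_simps)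
  have R2: "(rA ^ M * rB ^ M * rD)\<^sup>2 = inverse (L1 ^ E1 * L2 ^ E2 * L3)"
  proof -
    have "(rA ^ M * rB ^ M * rD)\<^sup>2 = (rA\<^sup>2) ^ M * (rB\<^sup>2) ^ M * rD\<^sup>2"
      by (simp add: power_mult_distrib power_mult[symmetric] mult.commute)
    also have "\<dots> = inverse ((L1 ^ (m * (m + 2)) * L2) ^ M * (L1 ^ m * L2) ^ M * (L1 ^ (m * m) * L2 ^ (2 * m) * L3))"
      unfolding sA sB sD by (rule invpow)
    also have "(L1 ^ (m * (m + 2)) * L2) ^ M * (L1 ^ m * L2) ^ M * (L1 ^ (m * m) * L2 ^ (2 * m) * L3)
        = L1 ^ (m * (m + 2) * M + m * M + m * m) * L2 ^ (M + M + 2 * m) * L3"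
    proof -
      have q1: "(L1 ^ (m * (m + 2)) * L2) ^ M = L1 ^ (m * (m + 2) * M) * L2 ^ M" by (simp add: power_mult_distrib power_mult)
      have q2: "(L1 ^ m * L2) ^ M = L1 ^ (m * M) * L2 ^ M" by (simp add: power_mult_distrib power_mult)
      show ?thesis unfolding q1 q2 power_add by (simp only: mult_ac)
    qed
    finally show ?thesis unfolding e1 e2 .
  qed
  define T where "T = L1 powr (- (1/2) * (real N ^ 2 - 1) ^ 2) * L2 powr (- (real N ^ 2 - 1)) * L3 powr (- 1/2)"
  have T0: "T \<ge> 0" unfolding T_def by simp
  have c: "real N ^ 2 - 1 = real (m * (m + 2))" using assms(2) by (simp add: power2_eq_square algebra_simps)
  have T2: "T\<^sup>2 = inverse (L1 ^ E1 * L2 ^ E2 * L3)"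
  proof -
    have "T\<^sup>2 = (L1 powr (- (1/2) * (real N ^ 2 - 1) ^ 2))\<^sup>2 * (L2 powr (- (real N ^ 2 - 1)))\<^sup>2 * (L3 powr (- 1/2))\<^sup>2"
      unfolding T_def by (simp add: power_mult_distrib)
    also have "(L1 powr (- (1/2) * (real N ^ 2 - 1) ^ 2))\<^sup>2 = L1 powr (- real E1)"
      using L unfolding c E1_def by (subst powr_power) auto
    also have "(L2 powr (- (real N ^ 2 - 1)))\<^sup>2 = L2 powr (- real E2)"
      using L unfolding c E2_def by (subst powr_power) auto
    also have "(L3 powr (- 1/2))\<^sup>2 = L3 powr (- 1)"
      using L by (subst powr_power) auto
    also have "L1 powr (- real E1) * L2 powr (- real E2) * L3 powr (- 1) = inverse (L1 ^ E1 * L2 ^ E2 * L3)"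
      using L by (simp add: powr_minus powr_realpow inverse_mult_distrib)
    finally show ?thesis .
  qed
  have "rA ^ M * rB ^ M * rD = T"
    using R2 T2 nn T0 by (subst power2_eq_iff_nonneg[symmetric]) auto
  then show ?thesis unfolding R T_def L1_def L2_def L3_def .
qed

theorem propositionE2:
  fixes N :: nat and lam :: real
  assumes "N \<ge> 1" and "lam < 1 / (1 + 2 * real N)"
  shows "Z_HT N lam / Z_HT N 0 =
    complex_of_real ((1 - lam) powr (- (1/2) * (real N ^ 2 - 1) ^ 2)
      * (1 - (1 + real N) * lam) powr (- (real N ^ 2 - 1))
      * (1 - (1 + 2 * real N) * lam) powr (- 1/2))"
proof -
  have ok: "okN N lam" using assms by (simp add: okN_def)
  have ok0: "okN N 0" using assms by (simp add: okN_def)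
  obtain m where m: "N = Suc m" using assms(1) by (cases N) auto
  have "Z_HT N lam / Z_HT N 0 = complex_of_real ((\<Prod>b\<in>Jset N. bval N lam b) / (\<Prod>b\<in>Jset N. bval N 0 b))"
    unfolding Z_eq[OF ok] Z_eq[OF ok0] by simp
  also have "(\<Prod>b\<in>Jset N. bval N lam b) / (\<Prod>b\<in>Jset N. bval N 0 b) = (\<Prod>b\<in>Jset N. bval N lam b / bval N 0 b)"
    by (simp add: prod_dividef)
  also have "\<dots> = (1 - lam) powr (- (1/2) * (real N ^ 2 - 1) ^ 2) * (1 - (1 + real N) * lam) powr (- (real N ^ 2 - 1))
        * (1 - (1 + 2 * real N) * lam) powr (- 1/2)"
    by (rule ratio_real[OF ok m])
  finally show ?thesis .
qed


end
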